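(* For every $n\in\mathbb{N}$ and every integer $d$ with $1\le d\le \sqrt{n}/3$, there exist a connected planar graph $G_d$ on $n$ vertices, vertices $u,v$ of $G_d$ with $d(u,v)=d$, and a deterministic root-choice rule for Algorithm KPR, such that for every integer $R>2d$, Algorithm KPR run on $G_d$ with parameter $R$ and this root-choice rule never separates $u$ and $v$ (i.e. $u$ and $v$ lie in the same output cluster with probability $1$).
   Context: Let $G=(V,E)$ be a connected unweighted planar graph and $d(\cdot,\cdot)$ its shortest-path distance. Two vertices are separated by a (random) partition of $V$ if they lie in different parts. Algorithm KPR with integer parameter $R\ge 1$: set $F=\emptyset$. For each of three phases $i=1,2,3$: for each connected component $C$ of the graph $(V,E\setminus F)$ (the components being those present at the start of the phase), choose a root $r\in C$, define the level of $x\in C$ as its distance from $r$ within $C$, sample $k$ uniformly from $\{0,1,\dots,R-1\}$ (independently), and add to $F$ every edge of $C$ joining a vertex at level $\ell$ to a vertex at level $\ell+1$ with $\ell\equiv k \pmod R$. Output the connected components of $(V,E\setminus F)$ as the clusters. A root-choice rule specifies, for each component $C$ encountered, which vertex of $C$ is used as its root. *)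

theory Defs
  imports "HOL-Analysis.Analysis"
begin

definition simple_graph :: "'a set \<Rightarrow> 'a set set \<Rightarrow> bool" where
  "simple_graph V E \<longleftrightarrow> finite V \<and> (\<forall>e\<in>E. e \<subseteq> V \<and> card e = 2)"

fun is_walk :: "'a set \<Rightarrow> 'a set set \<Rightarrow> 'a list \<Rightarrow> bool" where
  "is_walk V E [] = False"
| "is_walk V E [x] = (x \<in> V)"
| "is_walk V E (x # y # xs) = ({x, y} \<in> E \<and> is_walk V E (y # xs))"

definition reach :: "'a set \<Rightarrow> 'a set set \<Rightarrow> 'a \<Rightarrow> 'a \<Rightarrow> bool" where
  "reach V E x y \<longleftrightarrow> (\<exists>p. is_walk V E p \<and> hd p = x \<and> last p = y)"

definition gdist :: "'a set \<Rightarrow> 'a set set \<Rightarrow> 'a \<Rightarrow> 'a \<Rightarrow> nat" where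
  "gdist V E x y = (LEAST k. \<exists>p. is_walk V E p \<and> hd p = x \<and> last p = y \<and> length p = Suc k)"

definition connected_graph :: "'a set \<Rightarrow> 'a set set \<Rightarrow> bool" where
  "connected_graph V E \<longleftrightarrow> (\<forall>x\<in>V. \<forall>y\<in>V. reach V E x y)"

definition component :: "'a set \<Rightarrow> 'a set set \<Rightarrow> 'a \<Rightarrow> 'a set" where
  "component V E x = {y. reach V E x y}"

definition components :: "'a set \<Rightarrow> 'a set set \<Rightarrow> 'a set set" where
  "components V E = component V E ` V"

text \<open>Planarity: an embedding in the plane (complex numbers) with vertices as distinct
  points and edges as arcs that meet only at common endpoints and pass through no other vertex.\<close>
definition planar_graph :: "'a set \<Rightarrow> 'a set set \<Rightarrow> bool" where
  "planar_graph V E \<longleftrightarrow>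
     (\<exists>(pos :: 'a \<Rightarrow> complex) (\<gamma> :: 'a set \<Rightarrow> real \<Rightarrow> complex).
        inj_on pos V \<and>
        (\<forall>e\<in>E. arc (\<gamma> e) \<and> {pathstart (\<gamma> e), pathfinish (\<gamma> e)} = pos ` e) \<and>
        (\<forall>e\<in>E. \<forall>x\<in>V. pos x \<in> path_image (\<gamma> e) \<longrightarrow> x \<in> e) \<and>
        (\<forall>e\<in>E. \<forall>e'\<in>E. e \<noteq> e' \<longrightarrow>
            path_image (\<gamma> e) \<inter> path_image (\<gamma> e') \<subseteq> pos ` (e \<inter> e')))"

text \<open>F = edges removed so far; rho = root-choice rule (component \<mapsto> root);
  K = sampled offset k for each component (value in {0..<R}).  For each component C of (V, E - F),
  the levels are distances from rho C within C (= distances in (V, E - F), as C is a component),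
  and every edge of C joining level l to level l+1 with l mod R = K C is added to F.\<close>
definition kpr_phase :: "'a set \<Rightarrow> 'a set set \<Rightarrow> nat \<Rightarrow> ('a set \<Rightarrow> 'a) \<Rightarrow> ('a set \<Rightarrow> nat)
                          \<Rightarrow> 'a set set \<Rightarrow> 'a set set" where
  "kpr_phase V E R rho K F = F \<union>
     {e \<in> E - F. \<exists>C\<in>components V (E - F). e \<subseteq> C \<and>
        (\<exists>a b l. e = {a, b} \<and> l mod R = K C \<and>
                 gdist V (E - F) (rho C) a = l \<and> gdist V (E - F) (rho C) b = Suc l)}"

definition kpr_removed :: "'a set \<Rightarrow> 'a set set \<Rightarrow> nat \<Rightarrow> ('a set \<Rightarrow> 'a)
     \<Rightarrow> ('a set \<Rightarrow> nat) \<Rightarrow> ('a set \<Rightarrow> nat) \<Rightarrow> ('a set \<Rightarrow> nat) \<Rightarrow> 'a set set" where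
  "kpr_removed V E R rho K1 K2 K3 =
     kpr_phase V E R rho K3 (kpr_phase V E R rho K2 (kpr_phase V E R rho K1 {}))"

end

theory Submission
  imports Defs
begin

lemma is_walk_ne: "is_walk V E p \<Longrightarrow> p \<noteq> []"
  by (cases p) auto

lemma is_walk_Cons_iff: "is_walk V E (x # xs) \<longleftrightarrow> (xs = [] \<and> x \<in> V) \<or> (xs \<noteq> [] \<and> {x, hd xs} \<in> E \<and> is_walk V E xs)"
  by (cases xs) auto

lemma is_walk_last: "is_walk V E p \<Longrightarrow> last p \<in> V"
  by (induction p rule: is_walk.induct) auto

lemma is_walk_mono: "is_walk V E p \<Longrightarrow> E \<subseteq> E' \<Longrightarrow> is_walk V E' p"
  by (induction p rule: is_walk.induct) auto

lemma is_walk_append: "is_walk V E p \<Longrightarrow> is_walk V E q \<Longrightarrow> last p = hd q \<Longrightarrow> is_walk V E (p @ tl q)"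
proof (induction p rule: is_walk.induct)
  case (2 V E x)
  then show ?case by (cases q) auto
next
  case (3 V E x y xs)
  then show ?case by auto
qed auto

lemma is_walk_snoc: "is_walk V E p \<Longrightarrow> {last p, y} \<in> E \<Longrightarrow> y \<in> V \<Longrightarrow> is_walk V E (p @ [y])"
  using is_walk_append[of V E p "[last p, y]"] by auto

lemma is_walk_rev: "is_walk V E p \<Longrightarrow> \<forall>e\<in>E. e \<subseteq> V \<Longrightarrow> hd p \<in> V \<Longrightarrow> is_walk V E (rev p)"
proof (induction p rule: is_walk.induct)
  case (3 V E x y xs)
  have "is_walk V E (rev (y # xs))" using 3 by (auto simp: insert_commute)
  moreover have "last (rev (y#xs)) = y" by simp
  ultimately show ?case using is_walk_snoc[of V E "rev (y#xs)" x] 3 by (auto simp: insert_commute)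
qed auto

lemma reach_refl: "x \<in> V \<Longrightarrow> reach V E x x"
  unfolding reach_def by (rule exI[of _ "[x]"]) auto

lemma reach_trans: "reach V E x y \<Longrightarrow> reach V E y z \<Longrightarrow> reach V E x z"
  unfolding reach_def
proof (elim exE conjE)
  fix p q assume "is_walk V E p" "hd p = x" "last p = y" "is_walk V E q" "hd q = y" "last q = z"
  then show "\<exists>p. is_walk V E p \<and> hd p = x \<and> last p = z"
    apply (intro exI[of _ "p @ tl q"])
    using is_walk_append[of V E p q] is_walk_ne[of V E p] is_walk_ne[of V E q]
    by (cases q) (auto simp: last_append)
qed

lemma reach_sym: "reach V E x y \<Longrightarrow> \<forall>e\<in>E. e \<subseteq> V \<Longrightarrow> x \<in> V \<Longrightarrow> reach V E y x"
  unfolding reach_def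
  apply (elim exE conjE)
  subgoal for p apply (rule exI[of _ "rev p"])
    using is_walk_rev[of V E p] is_walk_ne[of V E p] by (auto simp: hd_rev last_rev)
  done

lemma reach_edge: "{x, y} \<in> E \<Longrightarrow> y \<in> V \<Longrightarrow> reach V E x y"
  unfolding reach_def by (rule exI[of _ "[x,y]"]) auto

lemma reach_mono: "reach V E x y \<Longrightarrow> E \<subseteq> E' \<Longrightarrow> reach V E' x y"
  unfolding reach_def using is_walk_mono by blast

lemma reach_in_V: "reach V E x y \<Longrightarrow> y \<in> V"
  unfolding reach_def using is_walk_last by blast

lemma reach_hd_in_V: "reach V E x y \<Longrightarrow> \<forall>e\<in>E. e \<subseteq> V \<Longrightarrow> x \<in> V"
  unfolding reach_def
  apply (elim exE conjE)
  subgoal for p by (cases p; cases "tl p") auto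
  done

lemma gdist_le: "is_walk V E p \<Longrightarrow> hd p = x \<Longrightarrow> last p = y \<Longrightarrow> gdist V E x y \<le> length p - 1"
proof -
  assume a: "is_walk V E p" "hd p = x" "last p = y"
  have "\<exists>q. is_walk V E q \<and> hd q = x \<and> last q = y \<and> length q = Suc (length p - 1)"
    using a is_walk_ne[OF a(1)] by (intro exI[of _ p]) auto
  then show ?thesis unfolding gdist_def by (rule Least_le)
qed

lemma gdist_walk: "reach V E x y \<Longrightarrow> \<exists>p. is_walk V E p \<and> hd p = x \<and> last p = y \<and> length p = Suc (gdist V E x y)"
proof -
  assume "reach V E x y"
  then obtain p where a: "is_walk V E p" "hd p = x" "last p = y" unfolding reach_def by blast
  have "\<exists>q. is_walk V E q \<and> hd q = x \<and> last q = y \<and> length q = Suc (length p - 1)"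
    using a is_walk_ne[OF a(1)] by (intro exI[of _ p]) auto
  then show ?thesis unfolding gdist_def by (rule LeastI_ex[where P="\<lambda>k. \<exists>q. is_walk V E q \<and> hd q = x \<and> last q = y \<and> length q = Suc k", OF exI])
qed

lemma walk_potential:
  assumes "\<And>a b. {a, b} \<in> E \<Longrightarrow> f b \<le> f a + (1::nat)"
  shows "is_walk V E p \<Longrightarrow> f (last p) \<le> f (hd p) + (length p - 1)"
proof (induction p)
  case (Cons x xs)
  show ?case
  proof (cases xs)
    case (Cons y ys)
    have "f y \<le> f x + 1" using assms Cons.prems Cons by auto
    then show ?thesis using Cons.IH Cons.prems Cons by auto
  qed simp
qed auto

lemma gdist_lower:
  assumes "\<And>a b. {a, b} \<in> E \<Longrightarrow> f b \<le> f a + (1::nat)" "E' \<subseteq> E" "reach V E' x y"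
  shows "f y \<le> f x + gdist V E' x y"
proof -
  obtain p where p: "is_walk V E' p" "hd p = x" "last p = y" "length p = Suc (gdist V E' x y)"
    using gdist_walk[OF assms(3)] by blast
  have "is_walk V E p" using is_walk_mono p(1) assms(2) by blast
  from walk_potential[OF assms(1) this] p show ?thesis by simp
qed

lemma gdist_edge:
  assumes "reach V E r a" "{a, b} \<in> E" "b \<in> V"
  shows "gdist V E r b \<le> gdist V E r a + 1"
proof -
  obtain p where p: "is_walk V E p" "hd p = r" "last p = a" "length p = Suc (gdist V E r a)"
    using gdist_walk[OF assms(1)] by blast
  have "is_walk V E (p @ [b])" using is_walk_snoc[OF p(1)] p(3) assms(2,3) by simp
  from gdist_le[OF this] p is_walk_ne[OF p(1)] show ?thesis by simp
qed

lemma component_eq: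
  assumes "\<forall>e\<in>E. e \<subseteq> V" "x \<in> V" "reach V E x y"
  shows "component V E y = component V E x"
proof -
  have yx: "reach V E y x" using reach_sym[OF assms(3,1,2)] .
  show ?thesis unfolding component_def
  proof (intro Collect_cong iffI)
    fix z assume "reach V E y z" then show "reach V E x z" using reach_trans[OF assms(3)] by simp
  next
    fix z assume "reach V E x z" then show "reach V E y z" using reach_trans[OF yx] by simp
  qed
qed

lemma fwalk: "(\<And>k. k < N \<Longrightarrow> {f k, f (Suc k)} \<in> E) \<Longrightarrow> (\<And>k. k \<le> N \<Longrightarrow> f k \<in> V) \<Longrightarrow> is_walk V E (map f [0..<Suc N])"
proof (induction N)
  case 0 then show ?case by simp
next
  case (Suc N)
  have w: "is_walk V E (map f [0..<Suc N])" using Suc by auto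
  have "map f [0..<Suc (Suc N)] = map f [0..<Suc N] @ [f (Suc N)]" by simp
  moreover have "last (map f [0..<Suc N]) = f N" by (simp del: upt_Suc add: last_map)
  ultimately show ?case using is_walk_snoc[OF w, of "f (Suc N)"] Suc.prems by simp
qed

lemma fwalk_bounds:
  assumes "\<And>k. k < N \<Longrightarrow> {f k, f (Suc k)} \<in> E" "\<And>k. k \<le> N \<Longrightarrow> f k \<in> V"
  shows "reach V E (f 0) (f N)" "gdist V E (f 0) (f N) \<le> N"
proof -
  have w: "is_walk V E (map f [0..<Suc N])" using fwalk assms by blast
  have h: "hd (map f [0..<Suc N]) = f 0" by (simp del: upt_Suc add: hd_map upt_conv_Cons)
  have l: "last (map f [0..<Suc N]) = f N" by (simp del: upt_Suc add: last_map)
  show "reach V E (f 0) (f N)" unfolding reach_def using w h l by blast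
  show "gdist V E (f 0) (f N) \<le> N" using gdist_le[OF w h l] by simp
qed

lemma gdist_tri:
  assumes "reach V E x y" "reach V E y z"
  shows "gdist V E x z \<le> gdist V E x y + gdist V E y z"
proof -
  obtain p where p: "is_walk V E p" "hd p = x" "last p = y" "length p = Suc (gdist V E x y)"
    using gdist_walk[OF assms(1)] by blast
  obtain q where q: "is_walk V E q" "hd q = y" "last q = z" "length q = Suc (gdist V E y z)"
    using gdist_walk[OF assms(2)] by blast
  have w: "is_walk V E (p @ tl q)" using is_walk_append[OF p(1) q(1)] p q by simp
  have "hd (p @ tl q) = x" using p is_walk_ne[OF p(1)] by simp
  moreover have "last (p @ tl q) = z" using q p is_walk_ne[OF q(1)] by (cases q) auto
  ultimately have "gdist V E x z \<le> length (p @ tl q) - 1" using gdist_le[OF w] by blast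
  then show ?thesis using p q by simp
qed

lemma gdist_sym_le:
  assumes "reach V E x y" "\<forall>e\<in>E. e \<subseteq> V" "x \<in> V"
  shows "gdist V E y x \<le> gdist V E x y"
proof -
  obtain p where p: "is_walk V E p" "hd p = x" "last p = y" "length p = Suc (gdist V E x y)"
    using gdist_walk[OF assms(1)] by blast
  have "is_walk V E (rev p)" using is_walk_rev[OF p(1) assms(2)] p assms by simp
  from gdist_le[OF this] p is_walk_ne[OF p(1)] show ?thesis by (simp add: hd_rev last_rev)
qed

lemma gdist_refl: "x \<in> V \<Longrightarrow> gdist V E x x = 0"
  using gdist_le[of V E "[x]" x x] by simp

lemma wf_diff: "\<forall>e\<in>E. e \<subseteq> V \<Longrightarrow> \<forall>e\<in>E - F. e \<subseteq> V" by blast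

lemma components_disj:
  assumes "\<forall>e\<in>E. e \<subseteq> V" "C \<in> components V E" "D \<in> components V E" "z \<in> C" "z \<in> D"
  shows "C = D"
proof -
  obtain x y where xy: "x \<in> V" "C = component V E x" "y \<in> V" "D = component V E y"
    using assms(2,3) unfolding components_def by auto
  have "component V E z = C" using component_eq[OF assms(1) xy(1)] xy assms(4) unfolding component_def by auto
  moreover have "component V E z = D" using component_eq[OF assms(1) xy(3)] xy assms(5) unfolding component_def by auto
  ultimately show ?thesis by simp
qed

lemma survive:
  assumes wf: "\<forall>e\<in>E. e \<subseteq> V" and e: "e \<in> E - F" "D \<in> components V (E - F)" "e \<subseteq> D"
    and nc: "\<not>(\<exists>a b l. e = {a,b} \<and> l mod R = K D \<and> gdist V (E-F) (rho D) a = l \<and> gdist V (E-F) (rho D) b = Suc l)"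
  shows "e \<in> E - kpr_phase V E R rho K F"
proof -
  have False if ein: "e \<in> kpr_phase V E R rho K F"
  proof -
  obtain C a b l where C: "C \<in> components V (E - F)" "e \<subseteq> C" "e = {a,b}" "l mod R = K C"
     "gdist V (E-F) (rho C) a = l" "gdist V (E-F) (rho C) b = Suc l"
    using e ein unfolding kpr_phase_def by blast
  have "C = D" using components_disj[OF wf_diff[OF wf] C(1) e(2), of a] C e by auto
  then show False using nc C by blast
  qed
  then show ?thesis using e by blast
qed

lemma nocut_low: assumes "(\<forall>x\<in>e. g x \<le> (k::nat))" shows "\<not>(\<exists>a b l. e = {a,b} \<and> l mod R = k \<and> g a = l \<and> g b = Suc l)"
proof -
  have False if "e = {a,b}" "l mod R = k" "g a = l" "g b = Suc l" for a b l
  proof -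
    have "l mod R \<le> l" by simp
    then show False using that assms by auto
  qed
  then show ?thesis by blast
qed

lemma nocut_high: "(\<forall>x\<in>e. k < g x \<and> g x \<le> B) \<Longrightarrow> B \<le> (R::nat) \<Longrightarrow> \<not>(\<exists>a b l. e = {a,b} \<and> l mod R = k \<and> g a = l \<and> g b = Suc l)"
proof -
  have False if "\<forall>x\<in>e. k < g x \<and> g x \<le> B" "B \<le> R" "e = {a,b}" "l mod R = k" "g a = l" "g b = Suc l" for a b l
  proof -
    have "l < R" using that by auto
    then show False using that by auto
  qed
  then show "(\<forall>x\<in>e. k < g x \<and> g x \<le> B) \<Longrightarrow> B \<le> (R::nat) \<Longrightarrow> \<not>(\<exists>a b l. e = {a,b} \<and> l mod R = k \<and> g a = l \<and> g b = Suc l)" by blast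
qed

lemma nocut_flat: "(\<forall>x\<in>e. g x = (c::nat)) \<Longrightarrow> \<not>(\<exists>a b l. e = {a,b} \<and> l mod R = k \<and> g a = l \<and> g b = Suc l)"
  by auto

lemma comp_in_components: "x \<in> V \<Longrightarrow> component V E x \<in> components V E"
  unfolding components_def by auto

lemma phase_mono: "F \<subseteq> kpr_phase V E R rho K F"
  unfolding kpr_phase_def by auto

lemma cut_sep_walk:
  assumes wf: "\<forall>e\<in>E. e \<subseteq> V" and x: "x \<in> V" and D: "D = component V (E - F) x"
    and r: "rho D \<in> D" and l: "l mod R = K D"
  shows "is_walk V (E - kpr_phase V E R rho K F) p \<Longrightarrow> hd p \<in> D \<Longrightarrow>
     last p \<in> D \<and> ((l < gdist V (E-F) (rho D) (hd p)) = (l < gdist V (E-F) (rho D) (last p)))"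
proof (induction p)
  case (Cons a xs)
  show ?case
  proof (cases xs)
    case Nil then show ?thesis using Cons by simp
  next
    case (Cons b ys)
    let ?F' = "kpr_phase V E R rho K F"
    let ?g = "gdist V (E-F) (rho D)"
    have ab: "{a,b} \<in> E - ?F'" "is_walk V (E - ?F') xs" using Cons.prems Cons by auto
    have abF: "{a,b} \<in> E - F" using ab phase_mono by blast
    have aD: "a \<in> D" using Cons.prems by simp
    have wfF: "\<forall>e\<in>E - F. e \<subseteq> V" using wf by blast
    have bV: "b \<in> V" "a \<in> V" using abF wf by auto
    have "reach V (E-F) x a" using aD D unfolding component_def by simp
    then have bD: "b \<in> D" using reach_trans[OF _ reach_edge[OF abF bV(1)]] D unfolding component_def by auto
    have rx: "reach V (E-F) x (rho D)" using r D unfolding component_def by simp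
    have ra: "reach V (E-F) (rho D) a" using reach_trans[OF reach_sym[OF rx wfF x]] aD D unfolding component_def by auto
    have rb: "reach V (E-F) (rho D) b" using reach_trans[OF reach_sym[OF rx wfF x]] bD D unfolding component_def by auto
    have g1: "?g b \<le> ?g a + 1" using gdist_edge[OF ra abF bV(1)] .
    have g2: "?g a \<le> ?g b + 1" using gdist_edge[OF rb _ bV(2)] abF by (simp add: insert_commute)
    have Dc: "D \<in> components V (E - F)" using D comp_in_components x by simp
    have sub: "{a,b} \<subseteq> D" using aD bD by simp
    have eq: "(l < ?g a) = (l < ?g b)"
    proof (rule ccontr)
      assume ne: "(l < ?g a) \<noteq> (l < ?g b)"
      have "\<exists>a' b' l'. {a,b} = {a',b'} \<and> l' mod R = K D \<and> ?g a' = l' \<and> ?g b' = Suc l'"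
      proof (cases "l < ?g a")
        case True
        then have "?g b = l" "?g a = Suc l" using ne g1 g2 by auto
        then show ?thesis using l by (intro exI[of _ b] exI[of _ a] exI[of _ l]) auto
      next
        case False
        then have "?g a = l" "?g b = Suc l" using ne g1 g2 by auto
        then show ?thesis using l by (intro exI[of _ a] exI[of _ b] exI[of _ l]) auto
      qed
      then have "{a,b} \<in> ?F'" using abF Dc sub unfolding kpr_phase_def by blast
      then show False using ab by blast
    qed
    have "last xs \<in> D \<and> ((l < ?g (hd xs)) = (l < ?g (last xs)))"
      using Cons.IH ab bD Cons by simp
    then show ?thesis using eq Cons by simp
  qed
qed simp

lemma cut_sep:
  assumes wf: "\<forall>e\<in>E. e \<subseteq> V" and x: "x \<in> V" and D: "D = component V (E - F) x"
    and r: "rho D \<in> D" and l: "l mod R = K D"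
    and y: "reach V (E - kpr_phase V E R rho K F) x y"
  shows "(l < gdist V (E-F) (rho D) x) = (l < gdist V (E-F) (rho D) y)"
proof -
  obtain p where p: "is_walk V (E - kpr_phase V E R rho K F) p" "hd p = x" "last p = y"
    using y unfolding reach_def by blast
  have "x \<in> D" using D reach_refl[OF x] unfolding component_def by simp
  then show ?thesis using cut_sep_walk[OF wf x D r l p(1)] p by simp
qed

datatype desc = Zd nat | Sp bool nat nat | Pole bool | Pd nat

locale gadget =
  fixes d n :: nat
  assumes d1: "1 \<le> d" and nbig: "9 * d^2 \<le> n"
begin

definition "S = d"
definition "h = (d + 1) div 2"
definition "q = 2 * h"
definition "L = d + q"
definition "wi = d + h"
definition "G0 = L + 2 * L * (S - 1) + 2"
definition "m = n - G0"

lemma hfacts: "d \<le> 2 * h" "2 * h \<le> d + 1" "1 \<le> h"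
  using d1 unfolding h_def by presburger+

lemma basic: "S = d" "d \<le> q" "q \<le> d + 1" "h \<le> d" "1 \<le> h" "L = d + 2*h" "wi < L" "d < wi" "3 \<le> L" "L \<le> 2*d+1"
  "1 \<le> S" "q = 2 * h"
  using d1 hfacts unfolding S_def q_def L_def wi_def by auto

lemma G0_le: "G0 \<le> n"
proof -
  have "G0 = L * (2*S - 1) + 2" unfolding G0_def using basic by (cases S) (auto simp: algebra_simps)
  also have "\<dots> \<le> (2*d+1) * (2*d - 1) + 2" using basic by (intro add_mono mult_mono) auto
  also have "\<dots> \<le> 9 * d^2" using d1 by (cases d) (auto simp: power2_eq_square algebra_simps)
  finally show ?thesis using nbig by simp
qed

definition "sidx i j = i * (S - 1) + (j - 1)"

definition enc :: "desc \<Rightarrow> nat" where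
  "enc x = (case x of Zd i \<Rightarrow> i
     | Sp b i j \<Rightarrow> L + (if b then 0 else L * (S - 1)) + sidx i j
     | Pole b \<Rightarrow> L + 2 * L * (S - 1) + (if b then 0 else 1)
     | Pd j \<Rightarrow> G0 + j)"

definition Dsc :: "desc set" where
  "Dsc = {Zd i | i. i < L} \<union> {Sp b i j | b i j. i < L \<and> 0 < j \<and> j < S} \<union> {Pole True, Pole False} \<union> {Pd j | j. j < m}"

lemma sp_bound: assumes "i < L" "0 < j" "j < S" shows "sidx i j < L * (S - 1)"
proof -
  have "i * (S - 1) + (j - 1) < i * (S-1) + (S - 1)" using assms by auto
  also have "\<dots> = Suc i * (S - 1)" by simp
  also have "\<dots> \<le> L * (S - 1)" using assms by (intro mult_right_mono) auto
  finally show ?thesis unfolding sidx_def .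
qed

lemma G0_alt: "G0 = L + 2 * (L * (S - 1)) + 2" unfolding G0_def by simp

lemma enc_range: "x \<in> Dsc \<Longrightarrow> enc x < n"
proof -
  assume x: "x \<in> Dsc"
  have G: "L + 2 * (L * (S - 1)) + 2 \<le> n" using G0_le G0_alt by simp
  show ?thesis
  proof (cases x)
    case (Sp b i j)
    then have "sidx i j < L * (S - 1)" using x sp_bound unfolding Dsc_def by auto
    then show ?thesis using G Sp unfolding enc_def by auto
  qed (use x G G0_le in \<open>auto simp: Dsc_def enc_def m_def G0_alt\<close>)
qed

lemma sp_inj: assumes "i < L" "0 < j" "j < S" "i' < L" "0 < j'" "j' < S"
  "sidx i j = sidx i' j'" shows "i = i' \<and> j = j'"
proof -
  have dm: "(a * k + c) div k = a \<and> (a * k + c) mod k = c" if "c < k" for a c k :: nat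
    using that by auto
  have "j - 1 < S - 1" "j' - 1 < S - 1" using assms by auto
  from dm[OF this(1), of i] dm[OF this(2), of i'] assms(7)[unfolded sidx_def]
  have "i = i'" "j - 1 = j' - 1" by auto
  then show ?thesis using assms by auto
qed

definition "M = L * (S - 1)"

lemma enc_cls: "x \<in> Dsc \<Longrightarrow>
   (\<exists>i. x = Zd i \<and> enc x < L) \<or>
   (\<exists>i j. x = Sp True i j \<and> L \<le> enc x \<and> enc x < L + M) \<or>
   (\<exists>i j. x = Sp False i j \<and> L + M \<le> enc x \<and> enc x < L + 2 * M) \<or>
   (x = Pole True \<and> enc x = L + 2 * M) \<or> (x = Pole False \<and> enc x = L + 2 * M + 1) \<or>
   (\<exists>j. x = Pd j \<and> L + 2 * M + 2 \<le> enc x)"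
proof -
  assume x: "x \<in> Dsc"
  show ?thesis
  proof (cases x)
    case (Sp b i j)
    then have "sidx i j < M" using x sp_bound unfolding Dsc_def M_def by auto
    then show ?thesis using Sp unfolding enc_def M_def by (cases b) auto
  qed (use x in \<open>auto simp: Dsc_def enc_def M_def G0_alt\<close>)
qed

lemma enc_inj: "inj_on enc Dsc"
proof (rule inj_onI)
  fix x y assume xy: "x \<in> Dsc" "y \<in> Dsc" "enc x = enc y"
  show "x = y"
  proof (cases "\<exists>b i j i' j'. x = Sp b i j \<and> y = Sp b i' j'")
    case True
    then obtain b i j i' j' where e: "x = Sp b i j" "y = Sp b i' j'" by blast
    have "i < L" "0 < j" "j < S" "i' < L" "0 < j'" "j' < S" using xy e unfolding Dsc_def by auto
    moreover have "sidx i j = sidx i' j'" using xy e unfolding enc_def by auto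
    ultimately show ?thesis using sp_inj e by blast
  next
    case False
    then show ?thesis using enc_cls[OF xy(1)] enc_cls[OF xy(2)] xy(3)
      by (auto simp: enc_def)
  qed
qed

lemma enc_surj: "enc ` Dsc = {..<n}"
proof
  show "enc ` Dsc \<subseteq> {..<n}" using enc_range by auto
next
  show "{..<n} \<subseteq> enc ` Dsc"
  proof
    fix x assume "x \<in> {..<n}"
    then have xn: "x < n" by simp
    show "x \<in> enc ` Dsc"
    proof (cases "x < L")
      case True
      then show ?thesis unfolding Dsc_def by (intro image_eqI[of _ _ "Zd x"]) (auto simp: enc_def)
    next
      case False
      show ?thesis
      proof (cases "x < L + 2 * L * (S - 1)")
        case True
        then have S2: "S - 1 > 0" using False by (cases "S - 1") auto
        define b where "b = (x < L + L * (S - 1))"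
        define y where "y = x - L - (if b then 0 else L * (S - 1))"
        have yb: "y < L * (S - 1)" using True False unfolding y_def b_def by auto
        define i where "i = y div (S - 1)"
        define j where "j = y mod (S - 1) + 1"
        have i: "i < L" unfolding i_def using yb S2 by (simp add: div_less_iff_less_mult)
        have "y mod (S - 1) < S - 1" using S2 by simp
        then have j: "0 < j" "j < S" unfolding j_def by auto
        have "sidx i j = y" unfolding sidx_def i_def j_def by (simp add: div_mult_mod_eq)
        then have "enc (Sp b i j) = x" unfolding enc_def y_def using False True
          by (auto simp: b_def)
        moreover have "Sp b i j \<in> Dsc" using i j unfolding Dsc_def by auto
        ultimately show ?thesis by force
      next
        case False2: False
        show ?thesis
        proof (cases "x < G0")
          case True
          then have "x = enc (Pole True) \<or> x = enc (Pole False)" using False2 unfolding enc_def G0_def by auto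
          then show ?thesis unfolding Dsc_def by auto
        next
          case False
          then have "x = enc (Pd (x - G0))" "x - G0 < m" using xn unfolding enc_def m_def by auto
          then show ?thesis unfolding Dsc_def by blast
        qed
      qed
    qed
  qed
qed

end

context gadget begin

definition "spd b i j = (if j = 0 then Zd i else if j = S then Pole b else Sp b i j)"

definition Ed :: "(desc \<times> desc) set" where
  "Ed = {(Zd i, Zd (Suc i mod L)) | i. i < L} \<union> {(spd b i j, spd b i (Suc j)) | b i j. i < L \<and> j < S}
     \<union> {(Pole False, Pd 0) | j::nat. 0 < m} \<union> {(Pd j, Pd (Suc j)) | j. Suc j < m}"

definition "Vn = {..<n}"
definition "E = (\<lambda>(a,b). {enc a, enc b}) ` Ed"
definition "dec = inv_into Dsc enc"

lemma Ed_cases: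
  assumes "(a,c) \<in> Ed"
  obtains (Z) i where "i < L" "a = Zd i" "c = Zd (Suc i mod L)"
    | (Sp) b i j where "i < L" "j < S" "a = spd b i j" "c = spd b i (Suc j)"
    | (P) "a = Pole False" "c = Pd 0" "0 < m" | (Pd) j where "a = Pd j" "c = Pd (Suc j)" "Suc j < m"
  using assms unfolding Ed_def by auto

lemma spd_Dsc: "i < L \<Longrightarrow> j \<le> S \<Longrightarrow> spd b i j \<in> Dsc"
  unfolding spd_def Dsc_def by (cases b) auto

lemma spd_ne: "spd b i j \<noteq> spd b i (Suc j)"
  unfolding spd_def by auto

lemma Ed_Dsc: "(a,b) \<in> Ed \<Longrightarrow> a \<in> Dsc \<and> b \<in> Dsc \<and> a \<noteq> b"
proof -
  assume ab: "(a,b) \<in> Ed"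
  have L3: "3 \<le> L" using basic by simp
  have ne: "Suc i mod L \<noteq> i" if "i < L" for i
  proof (cases "Suc i < L")
    case True then show ?thesis by simp
  next
    case False then have "Suc i = L" using that by simp
    then show ?thesis using L3 by simp
  qed
  from ab show ?thesis
  proof (cases rule: Ed_cases)
    case (Z i) then show ?thesis using ne[of i] L3 by (simp add: Dsc_def)
  next
    case (Sp b' i j) then show ?thesis using spd_Dsc[of i j b'] spd_Dsc[of i "Suc j" b'] spd_ne by simp
  next
    case P then show ?thesis by (simp add: Dsc_def m_def)
  next
    case (Pd j) then show ?thesis by (auto simp: Dsc_def)
  qed
qed

lemma dec_enc: "a \<in> Dsc \<Longrightarrow> dec (enc a) = a"
  unfolding dec_def using enc_inj by (simp add: inv_into_f_f)

lemma wfE: "\<forall>e\<in>E. e \<subseteq> Vn"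
  unfolding E_def Vn_def using Ed_Dsc enc_range by auto

lemma enc_Vn: "a \<in> Dsc \<Longrightarrow> enc a \<in> Vn"
  unfolding Vn_def using enc_range by auto

lemma edge_E: "(a,b) \<in> Ed \<Longrightarrow> {enc a, enc b} \<in> E"
  unfolding E_def by force

lemma pot_E:
  assumes "\<And>a b. (a,b) \<in> Ed \<Longrightarrow> g b \<le> g a + 1 \<and> g a \<le> g b + (1::nat)"
  shows "\<And>x y. {x, y} \<in> E \<Longrightarrow> (g \<circ> dec) y \<le> (g \<circ> dec) x + 1"
proof -
  fix x y assume "{x,y} \<in> E"
  then obtain a b where ab: "(a,b) \<in> Ed" "{x,y} = {enc a, enc b}" unfolding E_def by auto
  have "dec (enc a) = a" "dec (enc b) = b" using Ed_Dsc[OF ab(1)] dec_enc by auto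
  then show "(g \<circ> dec) y \<le> (g \<circ> dec) x + 1" using ab assms[OF ab(1)] by (auto simp: doubleton_eq_iff)
qed

definition "ZE = {{enc (Zd i), enc (Zd (Suc i mod L))} | i. i < L}"
definition "Fan b = {{enc (spd b i j), enc (spd b i (Suc j))} | i j. i < L \<and> j < S}"

lemma ZE_E: "ZE \<subseteq> E" unfolding ZE_def using edge_E unfolding Ed_def by blast
lemma Fan_E: "Fan b \<subseteq> E" unfolding Fan_def using edge_E unfolding Ed_def by blast

definition cyc :: "nat \<Rightarrow> nat \<Rightarrow> nat" where
  "cyc a b = (let t = (if a \<le> b then b - a else a - b) in min t (L - t))"

definition gP :: "bool \<Rightarrow> desc \<Rightarrow> nat" where
  "gP b x = (case x of Zd i \<Rightarrow> S | Sp b' i j \<Rightarrow> if b' = b then S - j else S + j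
     | Pole b' \<Rightarrow> if b' = b then 0 else 2 * S | Pd j \<Rightarrow> if b then 2 * S + j + 1 else j + 1)"

definition gW :: "desc \<Rightarrow> nat" where
  "gW x = (case x of Zd i \<Rightarrow> cyc wi i | Sp b i j \<Rightarrow> cyc wi i - j | Pole _ \<Rightarrow> 0 | Pd _ \<Rightarrow> 0)"

definition gU :: "desc \<Rightarrow> nat" where
  "gU x = (case x of Zd i \<Rightarrow> cyc 0 i | Sp b i j \<Rightarrow> min (cyc 0 i + j) (2 * S - j) | Pole _ \<Rightarrow> S | Pd _ \<Rightarrow> S)"

lemma cyc_le: "cyc a b \<le> d"
proof -
  have "2 * cyc a b \<le> L" unfolding cyc_def Let_def by auto
  then show ?thesis using basic by simp
qed

lemma cyc_step: "a < L \<Longrightarrow> i < L \<Longrightarrow> cyc a (Suc i mod L) \<le> cyc a i + 1 \<and> cyc a i \<le> cyc a (Suc i mod L) + 1"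
proof (cases "Suc i < L")
  case True
  then show "a < L \<Longrightarrow> i < L \<Longrightarrow> ?thesis" unfolding cyc_def Let_def by auto
next
  case False
  assume "a < L" "i < L"
  then have "Suc i = L" using False by auto
  then have "i = L - 1" "Suc i mod L = 0" by auto
  then show ?thesis using \<open>a < L\<close> unfolding cyc_def Let_def by auto
qed

lemma gP_spd: "j \<le> S \<Longrightarrow> gP b (spd b' i j) = (if b' = b then S - j else S + j)"
  unfolding gP_def spd_def by auto

lemma gW_spd: "j \<le> S \<Longrightarrow> gW (spd b i j) = cyc wi i - j"
  unfolding gW_def spd_def using cyc_le basic by auto

lemma gU_spd: "j \<le> S \<Longrightarrow> gU (spd b i j) = min (cyc 0 i + j) (2 * S - j)"
  unfolding gU_def spd_def using cyc_le[of 0 i] basic by (auto simp: min_def)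

lemma gP_lip: "(a,c) \<in> Ed \<Longrightarrow> gP b c \<le> gP b a + 1 \<and> gP b a \<le> gP b c + 1"
proof -
  assume "(a,c) \<in> Ed"
  then show ?thesis
  proof (cases rule: Ed_cases)
    case (Sp b' i j) then show ?thesis using gP_spd[of j b b' i] gP_spd[of "Suc j" b b' i] by auto
  qed (auto simp: gP_def)
qed

lemma gW_lip: "(a,c) \<in> Ed \<Longrightarrow> gW c \<le> gW a + 1 \<and> gW a \<le> gW c + 1"
proof -
  assume "(a,c) \<in> Ed"
  then show ?thesis
  proof (cases rule: Ed_cases)
    case (Z i) then show ?thesis using cyc_step[of wi i] basic by (simp add: gW_def)
  next
    case (Sp b i j) then show ?thesis using gW_spd[of j] gW_spd[of "Suc j"] by auto
  qed (auto simp: gW_def)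
qed

lemma gU_lip: "(a,c) \<in> Ed \<Longrightarrow> gU c \<le> gU a + 1 \<and> gU a \<le> gU c + 1"
proof -
  assume "(a,c) \<in> Ed"
  then show ?thesis
  proof (cases rule: Ed_cases)
    case (Z i) then show ?thesis using cyc_step[of 0 i] basic by (simp add: gU_def)
  next
    case (Sp b i j) then show ?thesis using gU_spd[of j] gU_spd[of "Suc j"] by auto
  qed (auto simp: gU_def)
qed

end

context gadget begin

definition "u0 = enc (Zd 0)"
definition "v0 = enc (Zd d)"
definition "NPn b = enc (Pole b)"
definition "w0 = enc (Zd wi)"
definition "rho C = (if NPn True \<in> C then NPn True else if NPn False \<in> C then NPn False
   else if w0 \<in> C then w0 else (SOME x. x \<in> C))"
definition "Du F = component Vn (E - F) u0"
definition "Good F \<longleftrightarrow> ZE \<subseteq> E - F \<and> (\<forall>b. NPn b \<in> Du F \<longrightarrow> Fan b \<subseteq> E - F)"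

lemma spd_S: "spd b i S = Pole b" unfolding spd_def using basic by auto
lemma spd_0: "spd b i 0 = Zd i" unfolding spd_def by auto

lemma Zd_Dsc: "i < L \<Longrightarrow> Zd i \<in> Dsc" unfolding Dsc_def by auto
lemma Pole_Dsc: "Pole b \<in> Dsc" unfolding Dsc_def by (cases b) auto

lemma Fan_mem: "i < L \<Longrightarrow> j < S \<Longrightarrow> {enc (spd b i j), enc (spd b i (Suc j))} \<in> Fan b"
  unfolding Fan_def by blast

lemma ZE_mem: "i < L \<Longrightarrow> {enc (Zd i), enc (Zd (Suc i mod L))} \<in> ZE"
  unfolding ZE_def by blast

lemma spoke_walk:
  assumes "Fan b \<subseteq> E'" "i < L" "j \<le> S"
  shows "reach Vn E' (NPn b) (enc (spd b i j)) \<and> gdist Vn E' (NPn b) (enc (spd b i j)) \<le> S - j"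
proof -
  define f where "f k = enc (spd b i (S - k))" for k
  have e: "{f k, f (Suc k)} \<in> E'" if "k < S - j" for k
  proof -
    have "S - k = Suc (S - Suc k)" "S - Suc k < S" using that by auto
    then have "{f k, f (Suc k)} \<in> Fan b" unfolding f_def using Fan_mem[OF assms(2), of "S - Suc k" b]
      by (simp add: insert_commute)
    then show ?thesis using assms(1) by blast
  qed
  have v: "f k \<in> Vn" if "k \<le> S - j" for k unfolding f_def using spd_Dsc[OF assms(2)] enc_Vn by auto
  have "f 0 = NPn b" "f (S - j) = enc (spd b i j)" unfolding f_def NPn_def using spd_S assms by auto
  then show ?thesis using fwalk_bounds[of "S - j" f E' Vn, OF e v] by auto
qed

lemma spoke_up:
  assumes "Fan b \<subseteq> E'" "i < L" "j \<le> S"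
  shows "reach Vn E' (enc (Zd i)) (enc (spd b i j)) \<and> gdist Vn E' (enc (Zd i)) (enc (spd b i j)) \<le> j"
proof -
  define f where "f k = enc (spd b i k)" for k
  have e: "{f k, f (Suc k)} \<in> E'" if "k < j" for k
  proof -
    have "{f k, f (Suc k)} \<in> Fan b" unfolding f_def using Fan_mem assms that by auto
    then show ?thesis using assms(1) by blast
  qed
  have v: "f k \<in> Vn" if "k \<le> j" for k unfolding f_def using spd_Dsc[OF assms(2)] enc_Vn that assms by auto
  have "f 0 = enc (Zd i)" unfolding f_def using spd_0 by auto
  then show ?thesis using fwalk_bounds[of j f E' Vn, OF e v] f_def by auto
qed

lemma zwalk:
  assumes "ZE \<subseteq> E'" "a < L"
  shows "reach Vn E' (enc (Zd a)) (enc (Zd ((a + N) mod L))) \<and> gdist Vn E' (enc (Zd a)) (enc (Zd ((a + N) mod L))) \<le> N"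
proof -
  define f where "f k = enc (Zd ((a + k) mod L))" for k
  have e: "{f k, f (Suc k)} \<in> E'" if "k < N" for k
  proof -
    have "Suc ((a + k) mod L) mod L = (a + Suc k) mod L" by (simp add: mod_Suc_eq)
    moreover have "(a + k) mod L < L" using assms by simp
    ultimately have "{f k, f (Suc k)} \<in> ZE" unfolding f_def using ZE_mem[of "(a + k) mod L"] by simp
    then show ?thesis using assms(1) by blast
  qed
  have v: "f k \<in> Vn" if "k \<le> N" for k unfolding f_def using assms Zd_Dsc enc_Vn by simp
  have "f 0 = enc (Zd a)" unfolding f_def using assms by simp
  then show ?thesis using fwalk_bounds[of N f E' Vn, OF e v] f_def by auto
qed

lemma L_pos: "0 < L" using basic(9) by simp

lemma u0_Vn: "u0 \<in> Vn" unfolding u0_def using enc_Vn[OF Zd_Dsc[OF L_pos]] .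

lemma wfF: "\<forall>e\<in>E - F. e \<subseteq> Vn" by (rule wf_diff[OF wfE])

lemma Du_mono: assumes "F \<subseteq> F'" shows "Du F' \<subseteq> Du F"
proof
  fix x assume "x \<in> Du F'"
  then have r: "reach Vn (E - F') u0 x" unfolding Du_def component_def by simp
  have "E - F' \<subseteq> E - F" using assms by blast
  then have "reach Vn (E - F) u0 x" using reach_mono[OF r] by simp
  then show "x \<in> Du F" unfolding Du_def component_def by simp
qed

lemma lower_bound:
  assumes "\<And>a c. (a,c) \<in> Ed \<Longrightarrow> g c \<le> g a + 1 \<and> g a \<le> g c + (1::nat)"
    "reach Vn (E - F) (enc r) (enc x)" "r \<in> Dsc" "x \<in> Dsc"
  shows "g x \<le> g r + gdist Vn (E - F) (enc r) (enc x)"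
proof -
  have "(g \<circ> dec) (enc x) \<le> (g \<circ> dec) (enc r) + gdist Vn (E - F) (enc r) (enc x)"
    by (rule gdist_lower[of E "g \<circ> dec" "E - F", OF pot_E[OF assms(1)] _ assms(2)]) auto
  then show ?thesis using dec_enc assms(3,4) by simp
qed

lemma in_Du:
  assumes "r \<in> Du F" "reach Vn (E - F) r x" shows "x \<in> Du F"
proof -
  have "reach Vn (E - F) u0 r" using assms(1) unfolding Du_def component_def by simp
  then show ?thesis using reach_trans[OF _ assms(2)] unfolding Du_def component_def by simp
qed

end

context gadget begin

lemma Du_comp: "Du F \<in> components Vn (E - F)"
  unfolding Du_def using comp_in_components[OF u0_Vn] .

lemma u0_Du: "u0 \<in> Du F"
  unfolding Du_def component_def using reach_refl[OF u0_Vn] by simp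

lemma reach_Du: "x \<in> Du F \<Longrightarrow> reach Vn (E - F) u0 x"
  unfolding Du_def component_def by simp

lemma pole_phase:
  assumes G: "Good F" and Pb: "NPn b \<in> Du F" and rh: "rho (Du F) = NPn b"
    and R: "2 * d < R" and K: "K (Du F) < R"
  shows "Good (kpr_phase Vn E R rho K F)"
    "NPn (\<not> b) \<in> Du F \<Longrightarrow> \<exists>b'. NPn b' \<in> Du (kpr_phase Vn E R rho K F)"
proof -
  define F' where "F' = kpr_phase Vn E R rho K F"
  define D where "D = Du F"
  define r where "r = NPn b"
  define lam where "lam x = gdist Vn (E - F) r x" for x
  have Dc: "D \<in> components Vn (E - F)" unfolding D_def by (rule Du_comp)
  have rD: "r \<in> D" using Pb unfolding r_def D_def .
  have rhoD: "rho D = r" using rh unfolding D_def r_def .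
  have fanb: "Fan b \<subseteq> E - F" using G Pb unfolding Good_def by blast
  have ZEF: "ZE \<subseteq> E - F" using G unfolding Good_def by blast
  have FF': "F \<subseteq> F'" unfolding F'_def by (rule phase_mono)
  have inD: "x \<in> D" if "reach Vn (E - F) r x" for x using in_Du[OF rD[unfolded D_def] that] unfolding D_def .
  have low: "gP b a \<le> lam (enc a)" if "reach Vn (E - F) r (enc a)" "a \<in> Dsc" for a
    using lower_bound[of "gP b" F "Pole b" a, OF gP_lip] that Pole_Dsc unfolding lam_def r_def NPn_def
    by (simp add: gP_def)
  have spk: "reach Vn (E - F) r (enc (spd b i j)) \<and> lam (enc (spd b i j)) \<le> S - j" if "i < L" "j \<le> S" for i j
    using spoke_walk[OF fanb that] unfolding lam_def r_def .
  have Zl: "reach Vn (E - F) r (enc (Zd i)) \<and> lam (enc (Zd i)) = S" if "i < L" for i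
  proof -
    have a: "reach Vn (E - F) r (enc (Zd i)) \<and> lam (enc (Zd i)) \<le> S" using spk[OF that, of 0] by (simp add: spd_0)
    moreover have "S \<le> lam (enc (Zd i))" using low[of "Zd i"] a Zd_Dsc[OF that] by (simp add: gP_def)
    ultimately show ?thesis by simp
  qed
  have lu: "lam u0 = S" using Zl[OF L_pos] unfolding u0_def by simp
  have surv: "e \<in> E - F'" if "e \<in> E - F" "\<forall>x\<in>e. reach Vn (E - F) r x"
     "\<not>(\<exists>a c l. e = {a,c} \<and> l mod R = K D \<and> lam a = l \<and> lam c = Suc l)" for e
    unfolding F'_def
    apply (rule survive[OF wfE that(1) Dc])
    using that inD rhoD unfolding lam_def by auto
  have ZE': "ZE \<subseteq> E - F'"
  proof
    fix e assume "e \<in> ZE"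
    then obtain i where i: "i < L" "e = {enc (Zd i), enc (Zd (Suc i mod L))}" unfolding ZE_def by blast
    have "Suc i mod L < L" using L_pos by simp
    then have "\<forall>x\<in>e. reach Vn (E - F) r x \<and> lam x = S" using Zl i by auto
    then show "e \<in> E - F'" using surv[of e] nocut_flat[of e lam S R "K D"] ZEF \<open>e \<in> ZE\<close> by blast
  qed
  have opp: "reach Vn (E - F) r (enc (spd (\<not>b) i j)) \<and> S + j \<le> lam (enc (spd (\<not>b) i j)) \<and> lam (enc (spd (\<not>b) i j)) \<le> S + j"
    if "Fan (\<not>b) \<subseteq> E - F" "i < L" "j \<le> S" for i j
  proof -
    have z: "reach Vn (E - F) r (enc (Zd i))" "lam (enc (Zd i)) = S" using Zl that by auto
    have up: "reach Vn (E - F) (enc (Zd i)) (enc (spd (\<not>b) i j)) \<and> gdist Vn (E-F) (enc (Zd i)) (enc (spd (\<not>b) i j)) \<le> j"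
      using spoke_up[OF that] .
    have re: "reach Vn (E - F) r (enc (spd (\<not>b) i j))" using reach_trans[OF z(1)] up by simp
    have "lam (enc (spd (\<not>b) i j)) \<le> S + j" using gdist_tri[OF z(1), of "enc (spd (\<not>b) i j)"] up z(2)
      unfolding lam_def by simp
    moreover have "S + j \<le> lam (enc (spd (\<not>b) i j))" using low[OF re spd_Dsc[OF that(2,3)]] gP_spd[OF that(3)] by simp
    ultimately show ?thesis using re by simp
  qed
  have fan_edge: "\<exists>i j. i < L \<and> j < S \<and> e = {enc (spd b' i j), enc (spd b' i (Suc j))}" if "e \<in> Fan b'" for e b'
    using that unfolding Fan_def by blast
  have Du': "Du F' \<subseteq> Du F" using Du_mono[OF FF'] .
  have Deq: "D = component Vn (E - F) u0" unfolding D_def Du_def ..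
  have rD': "rho D \<in> D" using rhoD rD by simp
  have Kmod: "K D mod R = K D" using K unfolding D_def by simp
  have cs: "(K D < lam u0) = (K D < lam y)" if "reach Vn (E - F') u0 y" for y
    using cut_sep[OF wfE u0_Vn Deq rD' Kmod that[unfolded F'_def]] rhoD unfolding lam_def by simp
  have reach_pole: "NPn b' \<in> Du F'" if "Fan b' \<subseteq> E - F'" for b'
  proof -
    have "reach Vn (E - F') (NPn b') (enc (spd b' 0 0))" using spoke_walk[OF that L_pos, of 0] by simp
    then have "reach Vn (E - F') u0 (NPn b')" using reach_sym[OF _ wfF] enc_Vn Pole_Dsc
      unfolding u0_def NPn_def by (simp add: spd_0)
    then show ?thesis unfolding Du_def component_def by simp
  qed
  show "Good F'" "NPn (\<not> b) \<in> Du F \<Longrightarrow> \<exists>b'. NPn b' \<in> Du F'"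
  proof -
    consider (lowK) "K D < S" | (highK) "S \<le> K D" by linarith
    then have "Good F' \<and> (NPn (\<not> b) \<in> Du F \<longrightarrow> (\<exists>b'. NPn b' \<in> Du F'))"
    proof cases
      case lowK
      have notb: "NPn b \<notin> Du F'"
      proof
        assume "NPn b \<in> Du F'"
        then have "reach Vn (E - F') u0 r" unfolding Du_def component_def r_def by simp
        then have "(K D < lam u0) = (K D < lam r)" using cs by simp
        moreover have "lam r = 0" unfolding lam_def r_def NPn_def using gdist_refl[OF enc_Vn[OF Pole_Dsc]] by simp
        ultimately show False using lu lowK by simp
      qed
      have fanopp: "Fan (\<not>b) \<subseteq> E - F'" if "Fan (\<not>b) \<subseteq> E - F"
      proof
        fix e assume e: "e \<in> Fan (\<not>b)"
        then obtain i j where ij: "i < L" "j < S" "e = {enc (spd (\<not>b) i j), enc (spd (\<not>b) i (Suc j))}"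
          using fan_edge by blast
        have "\<forall>x\<in>e. reach Vn (E - F) r x \<and> K D < lam x \<and> lam x \<le> 2 * S"
          using opp[OF that ij(1), of j] opp[OF that ij(1), of "Suc j"] ij lowK by auto
        moreover have "2 * S \<le> R" using R basic by simp
        ultimately show "e \<in> E - F'" using surv[of e] nocut_high[of e "K D" lam "2 * S" R] that e by blast
      qed
      have good: "Good F'" unfolding Good_def
      proof (intro conjI allI impI)
        show "ZE \<subseteq> E - F'" by (rule ZE')
        fix b' assume "NPn b' \<in> Du F'"
        then have b': "b' = (\<not> b)" "NPn b' \<in> Du F" using notb Du' by (cases "b' = b", auto)
        then have "Fan (\<not>b) \<subseteq> E - F" using G unfolding Good_def by auto
        then show "Fan b' \<subseteq> E - F'" using fanopp b' by simp
      qed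
      moreover have "\<exists>b'. NPn b' \<in> Du F'" if "NPn (\<not> b) \<in> Du F"
      proof -
        have "Fan (\<not>b) \<subseteq> E - F" using G that unfolding Good_def by auto
        then show ?thesis using reach_pole fanopp by blast
      qed
      ultimately show ?thesis by blast
    next
      case highK
      have fanb': "Fan b \<subseteq> E - F'"
      proof
        fix e assume e: "e \<in> Fan b"
        then obtain i j where ij: "i < L" "j < S" "e = {enc (spd b i j), enc (spd b i (Suc j))}"
          using fan_edge by blast
        have "\<forall>x\<in>e. reach Vn (E - F) r x \<and> lam x \<le> K D"
          using spk[OF ij(1), of j] spk[OF ij(1), of "Suc j"] ij highK by auto
        then show "e \<in> E - F'" using surv[of e] nocut_low[of e lam "K D" R] fanb e by blast
      qed
      have good: "Good F'" unfolding Good_def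
      proof (intro conjI allI impI)
        show "ZE \<subseteq> E - F'" by (rule ZE')
        fix b' assume b'D: "NPn b' \<in> Du F'"
        show "Fan b' \<subseteq> E - F'"
        proof (cases "b' = b")
          case True then show ?thesis using fanb' by simp
        next
          case False
          then have b': "b' = (\<not> b)" by simp
          have inF: "NPn (\<not>b) \<in> Du F" using b'D b' Du' by auto
          then have fo: "Fan (\<not>b) \<subseteq> E - F" using G unfolding Good_def by auto
          have "reach Vn (E - F) r (NPn (\<not>b)) \<and> 2 * S \<le> lam (NPn (\<not>b))"
            using opp[OF fo L_pos, of S] by (simp add: spd_S NPn_def)
          moreover have "reach Vn (E - F') u0 (NPn (\<not>b))" using b'D b' unfolding Du_def component_def by simp
          ultimately have K2: "2 * S \<le> K D"
            using cs[of "NPn (\<not>b)"] lu highK by linarith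
          show ?thesis
          proof
            fix e assume e: "e \<in> Fan b'"
            then obtain i j where ij: "i < L" "j < S" "e = {enc (spd (\<not>b) i j), enc (spd (\<not>b) i (Suc j))}"
              using fan_edge b' by blast
            have "\<forall>x\<in>e. reach Vn (E - F) r x \<and> lam x \<le> K D"
              using opp[OF fo ij(1), of j] opp[OF fo ij(1), of "Suc j"] ij K2 by auto
            then show "e \<in> E - F'" using surv[of e] nocut_low[of e lam "K D" R] fo e b' by blast
          qed
        qed
      qed
      then show ?thesis using reach_pole fanb' by blast
    qed
    then show "Good F'" "NPn (\<not> b) \<in> Du F \<Longrightarrow> \<exists>b'. NPn b' \<in> Du F'" by auto
  qed
qed

end

context gadget begin

lemma zwalk':
  assumes "\<And>k. k < N \<Longrightarrow> {enc (Zd ((a + k) mod L)), enc (Zd (Suc ((a + k) mod L) mod L))} \<in> E'" "a < L"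
  shows "reach Vn E' (enc (Zd a)) (enc (Zd ((a + N) mod L)))"
proof -
  define f where "f k = enc (Zd ((a + k) mod L))" for k
  have e: "{f k, f (Suc k)} \<in> E'" if "k < N" for k
  proof -
    have "Suc ((a + k) mod L) mod L = (a + Suc k) mod L" by (simp add: mod_Suc_eq)
    then show ?thesis using assms(1)[OF that] unfolding f_def by simp
  qed
  have v: "f k \<in> Vn" if "k \<le> N" for k unfolding f_def using assms Zd_Dsc enc_Vn by simp
  have "f 0 = enc (Zd a)" unfolding f_def using assms by simp
  then show ?thesis using fwalk_bounds(1)[of N f E' Vn, OF e v] f_def by auto
qed

lemma w0_Du: "ZE \<subseteq> E - F \<Longrightarrow> w0 \<in> Du F"
proof -
  assume "ZE \<subseteq> E - F"
  then have "reach Vn (E - F) (enc (Zd 0)) (enc (Zd ((0 + wi) mod L)))" using zwalk L_pos by blast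
  then show ?thesis using basic unfolding Du_def component_def u0_def w0_def by simp
qed

lemma w_phase:
  assumes G: "Good F" and nT: "NPn True \<notin> Du F" and nF: "NPn False \<notin> Du F"
    and R: "2 * d < R" and K: "K (Du F) < R"
  shows "reach Vn (E - kpr_phase Vn E R rho K F) u0 v0"
proof -
  define F' where "F' = kpr_phase Vn E R rho K F"
  define D where "D = Du F"
  define r where "r = w0"
  define lam where "lam x = gdist Vn (E - F) r x" for x
  have ZEF: "ZE \<subseteq> E - F" using G unfolding Good_def by blast
  have Dc: "D \<in> components Vn (E - F)" unfolding D_def by (rule Du_comp)
  have rD: "r \<in> D" using w0_Du[OF ZEF] unfolding r_def D_def .
  have rhoD: "rho D = r" using nT nF rD unfolding rho_def D_def r_def by simp
  have inD: "x \<in> D" if "reach Vn (E - F) r x" for x using in_Du[OF rD[unfolded D_def] that] unfolding D_def .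
  have wD: "Zd wi \<in> Dsc" using Zd_Dsc basic by simp
  have low: "gW a \<le> lam (enc a)" if "reach Vn (E - F) r (enc a)" "a \<in> Dsc" for a
    using lower_bound[of gW F "Zd wi" a, OF gW_lip] that wD unfolding lam_def r_def w0_def
    by (simp add: gW_def cyc_def)
  have ub1: "reach Vn (E - F) r (enc (Zd (k mod L))) \<and> lam (enc (Zd (k mod L))) \<le> k - wi" if "wi \<le> k" for k
  proof -
    have "(wi + (k - wi)) mod L = k mod L" using that by simp
    then show ?thesis using zwalk[OF ZEF, of wi "k - wi"] basic unfolding lam_def r_def w0_def by simp
  qed
  have ub2: "reach Vn (E - F) r (enc (Zd k)) \<and> lam (enc (Zd k)) \<le> wi - k" if "d \<le> k" "k \<le> wi" for k
  proof -
    have kL: "k < L" using that basic by simp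
    have "(k + (wi - k)) mod L = wi" using that basic by simp
    then have a: "reach Vn (E - F) (enc (Zd k)) w0 \<and> gdist Vn (E - F) (enc (Zd k)) w0 \<le> wi - k"
      using zwalk[OF ZEF kL, of "wi - k"] unfolding w0_def by simp
    have b: "reach Vn (E - F) w0 (enc (Zd k))" using reach_sym[OF _ wfF enc_Vn[OF Zd_Dsc[OF kL]]] a by blast
    have "gdist Vn (E - F) w0 (enc (Zd k)) \<le> gdist Vn (E - F) (enc (Zd k)) w0"
      using gdist_sym_le[OF _ wfF enc_Vn[OF Zd_Dsc[OF kL]]] a by blast
    then show ?thesis using a b unfolding lam_def r_def by simp
  qed
  have longb: "reach Vn (E - F) r (enc (Zd (k mod L))) \<and> lam (enc (Zd (k mod L))) \<le> h" if "d \<le> k" "k \<le> L" for k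
  proof (cases "k \<le> wi")
    case True
    then have "k mod L = k" using basic by simp
    have "wi - k \<le> h" using that(1) unfolding wi_def by simp
    then show ?thesis using ub2[OF that(1) True] \<open>k mod L = k\<close> by auto
  next
    case False
    have "k - wi \<le> h" using that(2) basic unfolding wi_def by simp
    then show ?thesis using ub1[of k] False by auto
  qed
  have shortb: "reach Vn (E - F) r (enc (Zd i)) \<and> h \<le> lam (enc (Zd i)) \<and> lam (enc (Zd i)) \<le> 2 * d" if "i \<le> d" for i
  proof -
    have iL: "i < L" using that basic by simp
    have "wi + h + i = L + i" using basic unfolding wi_def by simp
    then have "(wi + h + i) mod L = i" using iL by simp
    then have a: "reach Vn (E - F) r (enc (Zd i)) \<and> lam (enc (Zd i)) \<le> h + i"
      using ub1[of "wi + h + i"] by simp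
    have "h \<le> cyc wi i" unfolding cyc_def Let_def using that basic by (simp add: wi_def)
    then have "h \<le> lam (enc (Zd i))" using low[of "Zd i"] a Zd_Dsc[OF iL] by (simp add: gW_def)
    then show ?thesis using a that basic by simp
  qed
  have surv: "e \<in> E - F'" if "e \<in> E - F" "\<forall>x\<in>e. reach Vn (E - F) r x"
     "\<not>(\<exists>a c l. e = {a,c} \<and> l mod R = K D \<and> lam a = l \<and> lam c = Suc l)" for e
    unfolding F'_def
    apply (rule survive[OF wfE that(1) Dc])
    using that inD rhoD unfolding lam_def by auto
  consider (lowK) "K D < h" | (highK) "h \<le> K D" by linarith
  then show ?thesis
  proof cases
    case lowK
    have "reach Vn (E - F') (enc (Zd 0)) (enc (Zd ((0 + d) mod L)))"
    proof (rule zwalk'[OF _ L_pos])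
      fix k assume k: "k < d"
      have idx: "(0 + k) mod L = k" "Suc k mod L = Suc k" using k basic by auto
      define e where "e = {enc (Zd k), enc (Zd (Suc k))}"
      have eZ: "e \<in> E - F" using ZE_mem[of k] ZEF k basic idx unfolding e_def by auto
      have "\<forall>x\<in>e. reach Vn (E - F) r x \<and> K D < lam x \<and> lam x \<le> 2 * d"
        using shortb[of k] shortb[of "Suc k"] k lowK unfolding e_def by auto
      then have "e \<in> E - F'" using surv[OF eZ] nocut_high[of e "K D" lam "2 * d" R] R by auto
      then show "{enc (Zd ((0 + k) mod L)), enc (Zd (Suc ((0 + k) mod L) mod L))} \<in> E - F'"
        using idx unfolding e_def by simp
    qed
    then show ?thesis using basic unfolding u0_def v0_def F'_def by simp
  next
    case highK
    have dL: "d < L" using basic by simp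
    have "reach Vn (E - F') (enc (Zd d)) (enc (Zd ((d + q) mod L)))"
    proof (rule zwalk'[OF _ dL])
      fix k assume k: "k < q"
      have idx: "(d + k) mod L = d + k" using k basic by simp
      define e where "e = {enc (Zd (d + k)), enc (Zd (Suc (d + k) mod L))}"
      have eZ: "e \<in> E - F" using ZE_mem[of "d + k"] ZEF k basic unfolding e_def by auto
      have "\<forall>x\<in>e. reach Vn (E - F) r x \<and> lam x \<le> K D"
        using longb[of "d + k"] longb[of "Suc (d + k)"] k highK basic idx unfolding e_def by auto
      then have "e \<in> E - F'" using surv[OF eZ] nocut_low[of e lam "K D" R] by auto
      then show "{enc (Zd ((d + k) mod L)), enc (Zd (Suc ((d + k) mod L) mod L))} \<in> E - F'"
        using idx unfolding e_def by simp
    qed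
    moreover have "(d + q) mod L = 0" using basic by simp
    ultimately have "reach Vn (E - F') v0 u0" unfolding u0_def v0_def by simp
    then show ?thesis using reach_sym[OF _ wfF] u0_Vn unfolding v0_def F'_def
      using enc_Vn Zd_Dsc basic by (metis (no_types, lifting) dL reach_sym wfF)
  qed
qed

end

context gadget begin

lemma rho_in: "C \<noteq> {} \<Longrightarrow> rho C \<in> C"
  unfolding rho_def by (auto intro: someI_ex)

lemma pole_in_Du: "Fan b \<subseteq> E - F \<Longrightarrow> NPn b \<in> Du F"
proof -
  assume a: "Fan b \<subseteq> E - F"
  have "reach Vn (E - F) (NPn b) (enc (spd b 0 0))" using spoke_walk[OF a L_pos, of 0] by simp
  then have "reach Vn (E - F) u0 (NPn b)" using reach_sym[OF _ wfF] enc_Vn Pole_Dsc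
    unfolding u0_def NPn_def by (simp add: spd_0)
  then show ?thesis unfolding Du_def component_def by simp
qed

lemma rho_pole: "NPn b \<in> C \<Longrightarrow> (b \<or> NPn True \<notin> C) \<Longrightarrow> rho C = NPn b"
  unfolding rho_def by (cases b) auto

lemma main_reach:
  assumes R: "2 * d < R" and K: "\<forall>C. K1 C < R \<and> K2 C < R \<and> K3 C < R"
  shows "reach Vn (E - kpr_removed Vn E R rho K1 K2 K3) u0 v0"
proof -
  define F1 where "F1 = kpr_phase Vn E R rho K1 {}"
  define F2 where "F2 = kpr_phase Vn E R rho K2 F1"
  define F3 where "F3 = kpr_phase Vn E R rho K3 F2"
  have G0: "Good {}" unfolding Good_def using ZE_E Fan_E by auto
  have T0: "NPn True \<in> Du {}" using pole_in_Du[of True "{}"] Fan_E by simp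
  have F0: "NPn (\<not> True) \<in> Du {}" using pole_in_Du[of False "{}"] Fan_E by simp
  have r0: "rho (Du {}) = NPn True" using rho_pole[OF T0] by simp
  have G1: "Good F1" using pole_phase(1)[OF G0 T0 r0 R] K unfolding F1_def by blast
  obtain b' where b': "NPn b' \<in> Du F1" using pole_phase(2)[OF G0 T0 r0 R _ F0] K unfolding F1_def by blast
  define b2 where "b2 = (NPn True \<in> Du F1)"
  have P2: "NPn b2 \<in> Du F1"
  proof (cases "NPn True \<in> Du F1")
    case True then show ?thesis unfolding b2_def by simp
  next
    case False then have "b' = False" using b' by (cases b') auto
    then show ?thesis using b' False unfolding b2_def by simp
  qed
  have r2: "rho (Du F1) = NPn b2" using rho_pole[OF P2] unfolding b2_def by auto
  have G2: "Good F2" using pole_phase(1)[OF G1 P2 r2 R] K unfolding F2_def by blast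
  have "reach Vn (E - F3) u0 v0"
  proof (cases "NPn True \<in> Du F2 \<or> NPn False \<in> Du F2")
    case True
    define b3 where "b3 = (NPn True \<in> Du F2)"
    have P3: "NPn b3 \<in> Du F2"
    proof (cases "NPn True \<in> Du F2")
      case True then show ?thesis unfolding b3_def by simp
    next
      case False then show ?thesis using \<open>NPn True \<in> Du F2 \<or> NPn False \<in> Du F2\<close> unfolding b3_def by simp
    qed
    have r3: "rho (Du F2) = NPn b3" using rho_pole[OF P3] unfolding b3_def by auto
    have "Good F3" using pole_phase(1)[OF G2 P3 r3 R] K unfolding F3_def by blast
    then have "ZE \<subseteq> E - F3" unfolding Good_def by blast
    from zwalk[OF this L_pos, of d] show ?thesis using basic unfolding u0_def v0_def by simp
  next
    case False
    then show ?thesis using w_phase[OF G2 _ _ R] K unfolding F3_def by blast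
  qed
  then show ?thesis unfolding kpr_removed_def F3_def F2_def F1_def .
qed

lemma reach_all: "x \<in> Vn \<Longrightarrow> reach Vn E u0 x"
proof -
  assume "x \<in> Vn"
  then obtain a where a: "a \<in> Dsc" "x = enc a" using enc_surj unfolding Vn_def by blast
  have ZE': "ZE \<subseteq> E" by (rule ZE_E)
  have zr: "reach Vn E u0 (enc (Zd i))" if "i < L" for i
    using zwalk[OF ZE' L_pos, of i] that unfolding u0_def by simp
  have sr: "reach Vn E u0 (enc (spd b i j))" if "i < L" "j \<le> S" for b i j
    using reach_trans[OF zr[OF that(1)]] spoke_up[OF Fan_E that] by simp
  show "reach Vn E u0 x"
  proof (cases a)
    case (Zd i) then show ?thesis using a zr unfolding Dsc_def by auto
  next
    case (Sp b i j)
    then have "i < L" "j < S" "0 < j" using a unfolding Dsc_def by auto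
    then show ?thesis using sr[of i j b] Sp a unfolding spd_def by auto
  next
    case (Pole b) then show ?thesis using sr[OF L_pos, of S b] a spd_S by simp
  next
    case (Pd j)
    then have jm: "j < m" using a unfolding Dsc_def by auto
    define f where "f k = enc (if k = 0 then Pole False else Pd (k - 1))" for k
    have e: "{f k, f (Suc k)} \<in> E" if "k < Suc j" for k
    proof (cases k)
      case 0 then show ?thesis using edge_E[of "Pole False" "Pd 0"] jm unfolding f_def Ed_def by auto
    next
      case (Suc k') then show ?thesis using edge_E[of "Pd k'" "Pd (Suc k')"] jm that unfolding f_def Ed_def by auto
    qed
    have v: "f k \<in> Vn" if "k \<le> Suc j" for k
      using enc_Vn that jm Pole_Dsc unfolding f_def by (auto simp: Dsc_def)
    have "reach Vn E (f 0) (f (Suc j))" using fwalk_bounds(1)[of "Suc j" f E Vn, OF e v] .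
    moreover have "reach Vn E u0 (f 0)" using sr[OF L_pos, of S False] spd_S unfolding f_def by simp
    ultimately have "reach Vn E u0 (f (Suc j))" using reach_trans by metis
    then show ?thesis using Pd a unfolding f_def by simp
  qed
qed

lemma connected: "connected_graph Vn E"
  unfolding connected_graph_def
proof (intro ballI)
  fix x y assume "x \<in> Vn" "y \<in> Vn"
  have "reach Vn E x u0" using reach_sym[OF reach_all[OF \<open>x \<in> Vn\<close>] wfE u0_Vn] .
  then show "reach Vn E x y" using reach_trans[OF _ reach_all[OF \<open>y \<in> Vn\<close>]] by simp
qed

lemma simple: "simple_graph Vn E"
  unfolding simple_graph_def
proof (intro conjI ballI)
  show "finite Vn" unfolding Vn_def by simp
  fix e assume "e \<in> E"
  then obtain a b where ab: "(a,b) \<in> Ed" "e = {enc a, enc b}" unfolding E_def by auto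
  show "e \<subseteq> Vn" using wfE \<open>e \<in> E\<close> by blast
  have "enc a \<noteq> enc b" using Ed_Dsc[OF ab(1)] enc_inj unfolding inj_on_def by blast
  then show "card e = 2" using ab by simp
qed

lemma dist_uv: "gdist Vn E u0 v0 = d"
proof -
  have dL: "d < L" using basic by simp
  have a: "reach Vn (E - {}) u0 v0 \<and> gdist Vn (E - {}) u0 v0 \<le> d"
    using zwalk[of "E - {}" 0 d] ZE_E L_pos dL unfolding u0_def v0_def by simp
  have "gU (Zd d) \<le> gU (Zd 0) + gdist Vn (E - {}) u0 v0"
    using lower_bound[of gU "{}" "Zd 0" "Zd d", OF gU_lip] a Zd_Dsc dL L_pos unfolding u0_def v0_def by simp
  moreover have "gU (Zd d) = d" "gU (Zd 0) = 0" unfolding gU_def cyc_def Let_def using basic by auto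
  ultimately show ?thesis using a by simp
qed

end

lemma seg_ReIm: "z \<in> closed_segment a b \<Longrightarrow> \<exists>u. 0 \<le> u \<and> u \<le> 1 \<and> Re z = (1-u)*Re a + u*Re b \<and> Im z = (1-u)*Im a + u*Im b"
  by (auto simp: closed_segment_def)

context gadget begin

definition "Sr = real S"
definition "X = (real L - 1) / 2"
definition "sg b = (if b then 1 else -1 :: real)"
definition "SP b i t = Complex (real i + t * (X - real i)) (sg b * t * Sr)"
definition Pos :: "desc \<Rightarrow> complex" where
  "Pos x = (case x of Zd i \<Rightarrow> Complex (real i) 0 | Sp b i j \<Rightarrow> SP b i (real j / Sr)
     | Pole b \<Rightarrow> Complex X (sg b * Sr) | Pd j \<Rightarrow> Complex X (- Sr - 1 - real j))"

lemma Sr_pos: "Sr \<ge> 1" unfolding Sr_def using basic by simp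
lemma X_bounds: "1 \<le> X" "X < real L - 1" unfolding X_def using basic by auto

lemma Pos_spd: "j \<le> S \<Longrightarrow> Pos (spd b i j) = SP b i (real j / Sr)"
  unfolding Pos_def spd_def SP_def Sr_def using basic by auto

lemma SP_ReIm: "Re (SP b i t) = real i + t * (X - real i)" "Im (SP b i t) = sg b * t * Sr"
  unfolding SP_def by auto

lemma spoke_seg:
  assumes "z \<in> closed_segment (SP b i t1) (SP b i t2)" "t1 \<le> t2"
  shows "\<exists>t. t1 \<le> t \<and> t \<le> t2 \<and> z = SP b i t"
proof -
  obtain u where u: "0 \<le> u" "u \<le> 1" "Re z = (1-u)*Re (SP b i t1) + u*Re (SP b i t2)"
      "Im z = (1-u)*Im (SP b i t1) + u*Im (SP b i t2)"
    using seg_ReIm[OF assms(1)] by blast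
  define t where "t = (1-u)*t1 + u*t2"
  have "t1 \<le> t" unfolding t_def using u assms(2)
    by (metis add_increasing2 add_le_cancel_left diff_add_cancel mult.commute mult_le_cancel_left1 ordered_comm_semiring_class.comm_mult_left_mono le_diff_eq left_diff_distrib' mult.right_neutral diff_ge_0_iff_ge)
  moreover have "t \<le> t2" unfolding t_def using u assms(2) convex_bound_le[of t1 t2 t2 "1-u" u] by auto
  moreover have "Re z = Re (SP b i t)" "Im z = Im (SP b i t)" using u unfolding SP_ReIm t_def by (auto simp: algebra_simps)
  ultimately show ?thesis using complex_eqI by blast
qed

end

context gadget begin

definition "A1 = Complex (real L - 1) 0"
definition "A2 = Complex (real L) (Sr + 1)"
definition "A3 = Complex (-1) (Sr + 1)"
definition "A4 = Complex 0 0"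
definition "clos = linepath A1 A2 +++ (linepath A2 A3 +++ linepath A3 A4)"
definition "Gam a c = (if a = Zd (L - 1) \<and> c = Zd 0 then clos else linepath (Pos a) (Pos c))"

lemma clos_img: "path_image clos = closed_segment A1 A2 \<union> closed_segment A2 A3 \<union> closed_segment A3 A4"
  unfolding clos_def by (simp add: path_image_join Un_assoc)

lemma clos_pts:
  assumes "z \<in> path_image clos"
  shows "0 \<le> Im z \<and> (z = A1 \<or> z = A4 \<or> (0 < Im z \<and> (real L - 1 < Re z \<or> Re z < 0 \<or> Sr < Im z)))"
proof -
  have S1: "Sr \<ge> 1" by (rule Sr_pos)
  consider "z \<in> closed_segment A1 A2" | "z \<in> closed_segment A2 A3" | "z \<in> closed_segment A3 A4"
    using assms clos_img by blast
  then show ?thesis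
  proof cases
    case 1
    then obtain u where u: "0 \<le> u" "u \<le> 1" "Re z = real L - 1 + u" "Im z = u * (Sr + 1)"
      using seg_ReIm[OF 1] unfolding A1_def A2_def by (auto simp: algebra_simps)
    show ?thesis
    proof (cases "u = 0")
      case True then have "z = A1" using u unfolding A1_def by (simp add: complex_eq_iff)
      then show ?thesis unfolding A1_def by simp
    next
      case False then show ?thesis using u S1 by (simp add: mult_pos_pos)
    qed
  next
    case 2
    then have "Im z = Sr + 1" using seg_ReIm[OF 2] unfolding A2_def A3_def by (auto simp: algebra_simps)
    then show ?thesis using S1 by simp
  next
    case 3
    then obtain u where u: "0 \<le> u" "u \<le> 1" "Re z = u - 1" "Im z = (1 - u) * (Sr + 1)"
      using seg_ReIm[OF 3] unfolding A3_def A4_def by (auto simp: algebra_simps)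
    show ?thesis
    proof (cases "u = 1")
      case True then have "z = A4" using u unfolding A4_def by (simp add: complex_eq_iff)
      then show ?thesis unfolding A4_def by simp
    next
      case False then show ?thesis using u S1 by (simp add: mult_pos_pos)
    qed
  qed
qed

lemma clos_arc: "arc clos"
proof -
  have S1: "Sr \<ge> 1" by (rule Sr_pos)
  have L3: "real L \<ge> 3" using basic by simp
  have a23: "arc (linepath A2 A3)" "arc (linepath A3 A4)" "arc (linepath A1 A2)"
    unfolding A1_def A2_def A3_def A4_def using S1 L3 by (auto simp: complex_eq_iff)
  have i1: "closed_segment A2 A3 \<inter> closed_segment A3 A4 \<subseteq> {A3}"
  proof
    fix z assume z: "z \<in> closed_segment A2 A3 \<inter> closed_segment A3 A4"
    have "Im z = Sr + 1" using seg_ReIm[of z A2 A3] z unfolding A2_def A3_def by (auto simp: algebra_simps)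
    moreover obtain u where u: "0 \<le> u" "u \<le> 1" "Re z = u - 1" "Im z = (1 - u) * (Sr + 1)"
      using seg_ReIm[of z A3 A4] z unfolding A3_def A4_def by (auto simp: algebra_simps)
    ultimately have "u * (Sr + 1) = 0" by (simp add: algebra_simps)
    then have "u = 0" using S1 by simp
    then show "z \<in> {A3}" using u unfolding A3_def by (simp add: complex_eq_iff)
  qed
  have j1: "arc (linepath A2 A3 +++ linepath A3 A4)" by (rule arc_join) (use a23 i1 in auto)
  have i2: "closed_segment A1 A2 \<inter> (closed_segment A2 A3 \<union> closed_segment A3 A4) \<subseteq> {A2}"
  proof
    fix z assume z: "z \<in> closed_segment A1 A2 \<inter> (closed_segment A2 A3 \<union> closed_segment A3 A4)"
    obtain u where u: "0 \<le> u" "u \<le> 1" "Re z = real L - 1 + u" "Im z = u * (Sr + 1)"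
      using seg_ReIm[of z A1 A2] z unfolding A1_def A2_def by (auto simp: algebra_simps)
    show "z \<in> {A2}"
    proof (cases "z \<in> closed_segment A2 A3")
      case True
      then have "Im z = Sr + 1" using seg_ReIm[of z A2 A3] unfolding A2_def A3_def by (auto simp: algebra_simps)
      then have "(u - 1) * (Sr + 1) = 0" using u by (simp add: algebra_simps)
      then have "u = 1" using S1 by simp
      then show ?thesis using u unfolding A2_def by (simp add: complex_eq_iff)
    next
      case False
      then have "z \<in> closed_segment A3 A4" using z by blast
      then obtain v where "0 \<le> v" "v \<le> 1" "Re z = v - 1" using seg_ReIm[of z A3 A4] unfolding A3_def A4_def
        by (auto simp: algebra_simps)
      then show ?thesis using u L3 by simp
    qed
  qed
  show ?thesis unfolding clos_def
    by (rule arc_join) (use a23 j1 i2 in \<open>auto simp: path_image_join\<close>)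
qed

end

context gadget begin

lemma Lm1: "Suc (L - 1) mod L = 0" using L_pos by simp

lemma ptZ: "Suc i < L \<Longrightarrow> z \<in> path_image (Gam (Zd i) (Zd (Suc i mod L))) \<Longrightarrow> Im z = 0 \<and> real i \<le> Re z \<and> Re z \<le> real i + 1"
proof -
  assume i: "Suc i < L" and z: "z \<in> path_image (Gam (Zd i) (Zd (Suc i mod L)))"
  have "Gam (Zd i) (Zd (Suc i mod L)) = linepath (Complex (real i) 0) (Complex (real i + 1) 0)"
    using i unfolding Gam_def Pos_def by (auto simp: add.commute)
  then have z': "z \<in> closed_segment (Complex (real i) 0) (Complex (real i + 1) 0)" using z by simp
  obtain u where "0 \<le> u" "u \<le> 1" "Re z = (1-u) * real i + u * (real i + 1)" "Im z = 0"
    using seg_ReIm[OF z'] by auto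
  then show ?thesis by (auto simp: algebra_simps)
qed

lemma ptC: "z \<in> path_image (Gam (Zd (L - 1)) (Zd (Suc (L - 1) mod L))) \<Longrightarrow>
   0 \<le> Im z \<and> (z = A1 \<or> z = A4 \<or> (0 < Im z \<and> (real L - 1 < Re z \<or> Re z < 0 \<or> Sr < Im z)))"
  using clos_pts unfolding Gam_def Lm1 by simp

lemma spd_not_Zd: "spd b i (Suc j) \<noteq> Zd 0" unfolding spd_def by auto

lemma ptS: "j < S \<Longrightarrow> z \<in> path_image (Gam (spd b i j) (spd b i (Suc j))) \<Longrightarrow>
   \<exists>t. real j / Sr \<le> t \<and> t \<le> (real j + 1) / Sr \<and> z = SP b i t"
proof -
  assume j: "j < S" and z: "z \<in> path_image (Gam (spd b i j) (spd b i (Suc j)))"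
  have "Gam (spd b i j) (spd b i (Suc j)) = linepath (SP b i (real j / Sr)) (SP b i ((real j + 1) / Sr))"
    using j spd_not_Zd Pos_spd[of j] Pos_spd[of "Suc j"] unfolding Gam_def by (auto simp: add.commute)
  moreover have "real j / Sr \<le> (real j + 1) / Sr" using Sr_pos by (simp add: divide_right_mono)
  ultimately show ?thesis using spoke_seg z by auto
qed

lemma ptP0: "z \<in> path_image (Gam (Pole False) (Pd 0)) \<Longrightarrow> Re z = X \<and> - Sr - 1 \<le> Im z \<and> Im z \<le> - Sr"
proof -
  assume z: "z \<in> path_image (Gam (Pole False) (Pd 0))"
  have "Gam (Pole False) (Pd 0) = linepath (Complex X (- Sr)) (Complex X (- Sr - 1))"
    unfolding Gam_def Pos_def sg_def by auto
  then have z': "z \<in> closed_segment (Complex X (- Sr)) (Complex X (- Sr - 1))" using z by simp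
  obtain u where "0 \<le> u" "u \<le> 1" "Re z = (1-u) * X + u * X" "Im z = (1-u) * (- Sr) + u * (- Sr - 1)"
    using seg_ReIm[OF z'] by auto
  then show ?thesis by (auto simp: algebra_simps)
qed

lemma ptPn: "z \<in> path_image (Gam (Pd j) (Pd (Suc j))) \<Longrightarrow> Re z = X \<and> - Sr - 2 - real j \<le> Im z \<and> Im z \<le> - Sr - 1 - real j"
proof -
  assume z: "z \<in> path_image (Gam (Pd j) (Pd (Suc j)))"
  have "Gam (Pd j) (Pd (Suc j)) = linepath (Complex X (- Sr - 1 - real j)) (Complex X (- Sr - 2 - real j))"
    unfolding Gam_def Pos_def by (auto simp: algebra_simps)
  then have z': "z \<in> closed_segment (Complex X (- Sr - 1 - real j)) (Complex X (- Sr - 2 - real j))" using z by simp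
  obtain u where "0 \<le> u" "u \<le> 1" "Re z = (1-u) * X + u * X" "Im z = (1-u) * (- Sr - 1 - real j) + u * (- Sr - 2 - real j)"
    using seg_ReIm[OF z'] by auto
  then show ?thesis by (auto simp: algebra_simps)
qed

lemma SP_facts:
  assumes "i < L" "0 \<le> t" "t \<le> 1"
  shows "0 \<le> Re (SP b i t)" "Re (SP b i t) \<le> real L - 1" "\<bar>Im (SP b i t)\<bar> = t * Sr"
proof -
  have Re: "Re (SP b i t) = (1 - t) * real i + t * X" unfolding SP_ReIm by (simp add: algebra_simps)
  have X: "1 \<le> X" "X < real L - 1" by (rule X_bounds)+
  have iL: "real i \<le> real L - 1" using assms(1) by linarith
  show "0 \<le> Re (SP b i t)" unfolding Re using assms X by simp
  have "(1 - t) * real i \<le> (1 - t) * (real L - 1)" using iL assms by (intro mult_left_mono) auto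
  moreover have "t * X \<le> t * (real L - 1)" using X assms by (intro mult_left_mono) auto
  ultimately show "Re (SP b i t) \<le> real L - 1" unfolding Re by (simp add: algebra_simps)
  show "\<bar>Im (SP b i t)\<bar> = t * Sr" unfolding SP_ReIm sg_def using assms Sr_pos by (auto simp: abs_mult)
qed

lemma SP_0: "SP b i 0 = Pos (Zd i)" unfolding SP_def Pos_def by simp
lemma SP_1: "SP b i 1 = Pos (Pole b)" unfolding SP_def Pos_def by simp

lemma t_range: "real j / Sr \<le> t \<Longrightarrow> t \<le> (real j + 1) / Sr \<Longrightarrow> j < S \<Longrightarrow> 0 \<le> t \<and> t \<le> 1"
proof -
  assume a: "real j / Sr \<le> t" "t \<le> (real j + 1) / Sr" "j < S"
  have "0 \<le> real j / Sr" using Sr_pos by simp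
  moreover have "(real j + 1) / Sr \<le> 1" using a(3) Sr_pos unfolding Sr_def by simp
  ultimately show ?thesis using a by linarith
qed

lemma t_zero: "real j / Sr \<le> t \<Longrightarrow> t = 0 \<Longrightarrow> j = 0"
proof -
  assume "real j / Sr \<le> t" "t = 0"
  then have "real j \<le> 0" using Sr_pos by (simp add: divide_le_0_iff)
  then show "j = 0" by simp
qed

lemma t_one: "t \<le> (real j + 1) / Sr \<Longrightarrow> t = 1 \<Longrightarrow> j < S \<Longrightarrow> Suc j = S"
proof -
  assume "t \<le> (real j + 1) / Sr" "t = 1" "j < S"
  then have "Sr \<le> real j + 1" using Sr_pos by (simp add: le_divide_eq)
  then show "Suc j = S" using \<open>j < S\<close> unfolding Sr_def by simp
qed

end

context gadget begin

lemma memPos: "a \<in> A \<Longrightarrow> a \<in> B \<Longrightarrow> z = Pos a \<Longrightarrow> z \<in> Pos ` (A \<inter> B)" by blast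

lemma PosZ: "Pos (Zd i) = Complex (real i) 0" unfolding Pos_def by simp

lemma zpt: "Im z = 0 \<Longrightarrow> Re z = real k \<Longrightarrow> z = Pos (Zd k)" unfolding PosZ by (simp add: complex_eq_iff)

lemma pZZ:
  assumes "Suc i < L" "Suc k < L" "i \<noteq> k"
    "Im z = 0 \<and> real i \<le> Re z \<and> Re z \<le> real i + 1" "Im z = 0 \<and> real k \<le> Re z \<and> Re z \<le> real k + 1"
  shows "z \<in> Pos ` ({Zd i, Zd (Suc i mod L)} \<inter> {Zd k, Zd (Suc k mod L)})"
proof (cases "i < k")
  case True
  then have "real k \<le> real i + 1" using assms by linarith
  then have "k = Suc i" using True by linarith
  then have "Re z = real k" using assms by simp
  then show ?thesis using assms \<open>k = Suc i\<close> by (intro memPos[of "Zd k"]) (auto intro: zpt)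
next
  case False
  then have "i < k \<or> k < i" using assms by auto
  with False have ki: "k < i" by simp
  then have "real i \<le> real k + 1" using assms by linarith
  then have "i = Suc k" using ki by linarith
  then have "Re z = real i" using assms by simp
  then show ?thesis using assms \<open>i = Suc k\<close> by (intro memPos[of "Zd i"]) (auto intro: zpt)
qed

lemma A1_Pos: "A1 = Pos (Zd (L - 1))" unfolding A1_def PosZ using L_pos by (simp add: of_nat_diff)
lemma A4_Pos: "A4 = Pos (Zd 0)" unfolding A4_def PosZ by simp

lemma pZC:
  assumes "Suc i < L" "Im z = 0 \<and> real i \<le> Re z \<and> Re z \<le> real i + 1"
    "0 \<le> Im z \<and> (z = A1 \<or> z = A4 \<or> (0 < Im z \<and> (real L - 1 < Re z \<or> Re z < 0 \<or> Sr < Im z)))"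
  shows "z \<in> Pos ` ({Zd i, Zd (Suc i mod L)} \<inter> {Zd (L - 1), Zd (Suc (L - 1) mod L)})"
proof -
  consider "z = A1" | "z = A4" using assms by auto
  then show ?thesis
  proof cases
    case 1
    then have "Re z = real L - 1" unfolding A1_def by simp
    then have "Suc i = L - 1" using assms by linarith
    then show ?thesis using 1 A1_Pos assms(1) by (intro memPos[of "Zd (L - 1)"]) auto
  next
    case 2
    then have "Re z = 0" unfolding A4_def by simp
    then have "i = 0" using assms by linarith
    then show ?thesis using 2 A4_Pos Lm1 by (intro memPos[of "Zd 0"]) auto
  qed
qed

lemma sg_ne: "sg b \<noteq> 0" unfolding sg_def by auto

lemma pZS:
  assumes "Suc i < L" "Im z = 0 \<and> real i \<le> Re z \<and> Re z \<le> real i + 1"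
    "real j / Sr \<le> t" "t \<le> (real j + 1) / Sr" "z = SP b k t"
  shows "z \<in> Pos ` ({Zd i, Zd (Suc i mod L)} \<inter> {spd b k j, spd b k (Suc j)})"
proof -
  have "sg b * t * Sr = 0" using assms(2,5) SP_ReIm by simp
  then have t0: "t = 0" using sg_ne Sr_pos by simp
  then have j0: "j = 0" using t_zero assms(3) by blast
  have zk: "z = Pos (Zd k)" using assms(5) t0 SP_0 by simp
  then have "Re z = real k" unfolding PosZ by simp
  then have "k = i \<or> k = Suc i" using assms(2) by linarith
  then show ?thesis using zk j0 spd_0 assms(1) by (intro memPos[of "Zd k"]) (auto)
qed

lemma pCS:
  assumes "0 \<le> Im z \<and> (z = A1 \<or> z = A4 \<or> (0 < Im z \<and> (real L - 1 < Re z \<or> Re z < 0 \<or> Sr < Im z)))"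
    "k < L" "j < S" "real j / Sr \<le> t" "t \<le> (real j + 1) / Sr" "z = SP b k t"
  shows "z \<in> Pos ` ({Zd (L - 1), Zd (Suc (L - 1) mod L)} \<inter> {spd b k j, spd b k (Suc j)})"
proof -
  have t: "0 \<le> t" "t \<le> 1" using t_range assms by auto
  note f = SP_facts[OF assms(2) t, of b]
  have "t * Sr \<le> Sr" using t Sr_pos by (simp add: mult_left_le_one_le)
  then have alt: "z = A1 \<or> z = A4" using assms(1) f assms(6) by auto
  then have "Im z = 0" unfolding A1_def A4_def by auto
  then have "sg b * t * Sr = 0" using assms(6) SP_ReIm by simp
  then have t0: "t = 0" using sg_ne Sr_pos by simp
  then have j0: "j = 0" using t_zero assms(4) by blast
  have zk: "z = Pos (Zd k)" using assms(6) t0 SP_0 by simp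
  then have Rk: "Re z = real k" unfolding PosZ by simp
  from alt show ?thesis
  proof
    assume "z = A1"
    then have "real k = real L - 1" using Rk unfolding A1_def by simp
    then have "k = L - 1" using L_pos by linarith
    then show ?thesis using zk j0 spd_0 by (intro memPos[of "Zd k"]) auto
  next
    assume "z = A4"
    then have "k = 0" using Rk unfolding A4_def by simp
    then show ?thesis using zk j0 spd_0 Lm1 by (intro memPos[of "Zd k"]) auto
  qed
qed

lemma pSS:
  assumes "i < L" "k < L" "j < S" "j' < S"
    "{spd b i j, spd b i (Suc j)} \<noteq> {spd b' k j', spd b' k (Suc j')}"
    "real j / Sr \<le> t" "t \<le> (real j + 1) / Sr" "z = SP b i t"
    "real j' / Sr \<le> t'" "t' \<le> (real j' + 1) / Sr" "z = SP b' k t'"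
  shows "z \<in> Pos ` ({spd b i j, spd b i (Suc j)} \<inter> {spd b' k j', spd b' k (Suc j')})"
proof -
  have t: "0 \<le> t" "t \<le> 1" using t_range assms by auto
  have t': "0 \<le> t'" "t' \<le> 1" using t_range assms by auto
  have Im: "sg b * t * Sr = sg b' * t' * Sr" using assms(8,11) SP_ReIm by metis
  have Re: "real i + t * (X - real i) = real k + t' * (X - real k)" using assms(8,11) SP_ReIm by metis
  show ?thesis
  proof (cases "b = b'")
    case True
    then have tt: "t = t'" using Im sg_ne Sr_pos by simp
    then have "(real i - real k) * (1 - t) = 0" using Re by (simp add: algebra_simps)
    then consider "i = k" | "t = 1" by auto
    then show ?thesis
    proof cases
      case 1
      then have jj: "j \<noteq> j'" using assms(5) True by auto
      show ?thesis
      proof (cases "j < j'")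
        case True
        have "real j' \<le> t * Sr" "t * Sr \<le> real j + 1" using assms(6,7,9,10) tt Sr_pos by (auto simp: field_simps)
        then have "j' = Suc j" using True by linarith
        then have "t * Sr = real j'" using \<open>real j' \<le> t * Sr\<close> \<open>t * Sr \<le> real j + 1\<close> by simp
        then have "t = real j' / Sr" using Sr_pos by (simp add: field_simps)
        then have "z = Pos (spd b i j')" using assms(8) Pos_spd assms(4) by simp
        then show ?thesis using \<open>j' = Suc j\<close> 1 \<open>b = b'\<close> by (intro memPos[of "spd b i j'"]) auto
      next
        case False
        then have Tj: "j' < j" using jj by simp
        have "real j \<le> t * Sr" "t * Sr \<le> real j' + 1" using assms(6,7,9,10) tt Sr_pos by (auto simp: field_simps)
        then have "j = Suc j'" using Tj by linarith
        then have "t * Sr = real j" using \<open>real j \<le> t * Sr\<close> \<open>t * Sr \<le> real j' + 1\<close> by simp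
        then have "t = real j / Sr" using Sr_pos by (simp add: field_simps)
        then have "z = Pos (spd b i j)" using assms(8) Pos_spd assms(3) by simp
        then show ?thesis using \<open>j = Suc j'\<close> 1 \<open>b = b'\<close> by (intro memPos[of "spd b i j"]) auto
      qed
    next
      case 2
      then have "Suc j = S" "Suc j' = S" using t_one assms tt by auto
      moreover have "z = Pos (Pole b)" using 2 assms(8) SP_1 by simp
      ultimately show ?thesis using spd_S \<open>b = b'\<close> by (intro memPos[of "Pole b"]) (auto simp: spd_S)
    qed
  next
    case False
    then have "sg b' = - sg b" unfolding sg_def by (cases b; cases b') auto
    then have "sg b * (t + t') * Sr = 0" using Im by (simp add: algebra_simps)
    then have "t + t' = 0" using sg_ne Sr_pos by simp
    then have t0: "t = 0" "t' = 0" using t t' by auto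
    then have "j = 0" "j' = 0" using t_zero assms by blast+
    moreover have "z = Pos (Zd i)" "z = Pos (Zd k)" using t0 assms(8,11) SP_0 by auto
    then have "i = k" unfolding PosZ by simp
    ultimately show ?thesis using \<open>z = Pos (Zd i)\<close> spd_0 by (intro memPos[of "Zd i"]) auto
  qed
qed

lemma pSP0:
  assumes "j < S" "real j / Sr \<le> t" "t \<le> (real j + 1) / Sr" "z = SP b k t"
    "Re z = X \<and> - Sr - 1 \<le> Im z \<and> Im z \<le> - Sr"
  shows "z \<in> Pos ` ({spd b k j, spd b k (Suc j)} \<inter> {Pole False, Pd 0})"
proof -
  have t: "0 \<le> t" "t \<le> 1" using t_range assms by auto
  have Im: "Im z = sg b * t * Sr" using assms(4) SP_ReIm by simp
  have b: "b = False"
  proof (rule ccontr)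
    assume "b \<noteq> False"
    then have "Im z \<ge> 0" using Im t Sr_pos unfolding sg_def by simp
    then show False using assms(5) Sr_pos by linarith
  qed
  then have "- (t * Sr) \<le> - Sr" using Im assms(5) unfolding sg_def by simp
  then have "Sr * 1 \<le> Sr * t" by (simp add: algebra_simps)
  then have "1 \<le> t" using Sr_pos by (simp add: mult_le_cancel_left_pos)
  then have t1: "t = 1" using t by simp
  then have "Suc j = S" using t_one assms by blast
  moreover have "z = Pos (Pole False)" using t1 assms(4) SP_1 b by simp
  ultimately show ?thesis using b by (intro memPos[of "Pole False"]) (auto simp: spd_S)
qed

lemma pSPn:
  assumes "j < S" "real j / Sr \<le> t" "t \<le> (real j + 1) / Sr" "z = SP b k t"
    "Re z = X \<and> - Sr - 2 - real j' \<le> Im z \<and> Im z \<le> - Sr - 1 - real j'"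
  shows False
proof -
  have t: "0 \<le> t" "t \<le> 1" using t_range assms by auto
  have Im: "Im z = sg b * t * Sr" using assms(4) SP_ReIm by simp
  have "t * Sr \<le> Sr" using t Sr_pos by (simp add: mult_left_le_one_le)
  moreover have "0 \<le> t * Sr" using t Sr_pos by simp
  ultimately have "- Sr \<le> Im z" using Im unfolding sg_def by (cases b) auto
  then show False using assms(5) by simp
qed

lemma pP0Pn:
  assumes "Re z = X \<and> - Sr - 1 \<le> Im z \<and> Im z \<le> - Sr"
    "Re z = X \<and> - Sr - 2 - real j \<le> Im z \<and> Im z \<le> - Sr - 1 - real j"
  shows "z \<in> Pos ` ({Pole False, Pd 0} \<inter> {Pd j, Pd (Suc j)})"
proof -
  have "j = 0" using assms by linarith
  then have "Im z = - Sr - 1" using assms by simp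
  then have "z = Pos (Pd 0)" using assms unfolding Pos_def by (simp add: complex_eq_iff)
  then show ?thesis using \<open>j = 0\<close> by (intro memPos[of "Pd 0"]) auto
qed

lemma pPnPn:
  assumes "j \<noteq> k"
    "Re z = X \<and> - Sr - 2 - real j \<le> Im z \<and> Im z \<le> - Sr - 1 - real j"
    "Re z = X \<and> - Sr - 2 - real k \<le> Im z \<and> Im z \<le> - Sr - 1 - real k"
  shows "z \<in> Pos ` ({Pd j, Pd (Suc j)} \<inter> {Pd k, Pd (Suc k)})"
proof (cases "j < k")
  case True
  then have "k = Suc j" using assms by linarith
  then have "Im z = - Sr - 1 - real k" using assms by simp
  then have "z = Pos (Pd k)" using assms unfolding Pos_def by (simp add: complex_eq_iff)
  then show ?thesis using \<open>k = Suc j\<close> by (intro memPos[of "Pd k"]) auto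
next
  case False
  then have "k < j" using assms by simp
  then have "j = Suc k" using assms by linarith
  then have "Im z = - Sr - 1 - real j" using assms by simp
  then have "z = Pos (Pd j)" using assms unfolding Pos_def by (simp add: complex_eq_iff)
  then show ?thesis using \<open>j = Suc k\<close> by (intro memPos[of "Pd j"]) auto
qed

end

context gadget begin

lemma Ed_kinds:
  assumes "(a,c) \<in> Ed"
  obtains (Zs) i where "Suc i < L" "a = Zd i" "c = Zd (Suc i mod L)"
    | (Cl) "a = Zd (L - 1)" "c = Zd (Suc (L - 1) mod L)"
    | (Sk) b i j where "i < L" "j < S" "a = spd b i j" "c = spd b i (Suc j)"
    | (P0) "a = Pole False" "c = Pd 0"
    | (Pn) j where "a = Pd j" "c = Pd (Suc j)"
proof -
  from assms show ?thesis
  proof (cases rule: Ed_cases)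
    case (Z i)
    show ?thesis
    proof (cases "Suc i < L")
      case True then show ?thesis using Z that(1) by blast
    next
      case False then have "i = L - 1" using Z by simp
      then show ?thesis using Z that(2) by blast
    qed
  next
    case (Sp b i j) then show ?thesis using that(3) by blast
  next
    case P then show ?thesis using that(4) by blast
  next
    case (Pd j) then show ?thesis using that(5) by blast
  qed
qed

definition "kpts a c z \<longleftrightarrow>
   (\<exists>i. Suc i < L \<and> a = Zd i \<and> c = Zd (Suc i mod L) \<and> Im z = 0 \<and> real i \<le> Re z \<and> Re z \<le> real i + 1)"

lemma edges_inter:
  assumes e1: "(a,c) \<in> Ed" and e2: "(a',c') \<in> Ed" and ne: "{a,c} \<noteq> {a',c'}"
    and z1: "z \<in> path_image (Gam a c)" and z2: "z \<in> path_image (Gam a' c')"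
  shows "z \<in> Pos ` ({a,c} \<inter> {a',c'})"
proof -
  have S0: "0 < Sr" using Sr_pos by simp
  have sym: "z \<in> Pos ` ({a',c'} \<inter> {a,c}) \<Longrightarrow> z \<in> Pos ` ({a,c} \<inter> {a',c'})" by (simp add: Int_commute)
  from e1 show ?thesis
  proof (cases rule: Ed_kinds)
    case (Zs i)
    note p1 = ptZ[OF Zs(1) z1[unfolded Zs(2,3)]]
    from e2 show ?thesis
    proof (cases rule: Ed_kinds)
      case (Zs k)
      have "i \<noteq> k" using ne Zs \<open>a = _\<close> \<open>c = _\<close> by auto
      from pZZ[OF \<open>Suc i < L\<close> Zs(1) this p1 ptZ[OF Zs(1) z2[unfolded Zs(2,3)]]]
      show ?thesis using \<open>a = _\<close> \<open>c = _\<close> Zs by simp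
    next
      case Cl then show ?thesis using pZC[OF \<open>Suc i < L\<close> p1 ptC[OF z2[unfolded Cl]]] \<open>a = _\<close> \<open>c = _\<close> by simp
    next
      case (Sk b k j)
      obtain t where "real j / Sr \<le> t" "t \<le> (real j + 1) / Sr" "z = SP b k t" using ptS[OF Sk(2) z2[unfolded Sk(3,4)]] by blast
      then show ?thesis using pZS[OF \<open>Suc i < L\<close> p1] \<open>a = _\<close> \<open>c = _\<close> Sk by simp
    next
      case P0 then show ?thesis using ptP0[OF z2[unfolded P0]] p1 S0 by simp
    next
      case (Pn j) then show ?thesis using ptPn[OF z2[unfolded Pn]] p1 S0 by simp
    qed
  next
    case Cl
    note p1 = ptC[OF z1[unfolded Cl]]
    from e2 show ?thesis
    proof (cases rule: Ed_kinds)
      case (Zs k) then show ?thesis using sym pZC[OF Zs(1) ptZ[OF Zs(1) z2[unfolded Zs(2,3)]] p1] \<open>a = _\<close> \<open>c = _\<close> by simp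
    next
      case Cl then show ?thesis using ne \<open>a = _\<close> \<open>c = _\<close> by simp
    next
      case (Sk b k j)
      obtain t where "real j / Sr \<le> t" "t \<le> (real j + 1) / Sr" "z = SP b k t" using ptS[OF Sk(2) z2[unfolded Sk(3,4)]] by blast
      then show ?thesis using pCS[OF p1 Sk(1,2)] \<open>a = _\<close> \<open>c = _\<close> Sk by simp
    next
      case P0 then show ?thesis using ptP0[OF z2[unfolded P0]] p1 S0 by linarith
    next
      case (Pn j) then show ?thesis using ptPn[OF z2[unfolded Pn]] p1 S0 by simp
    qed
  next
    case (Sk b i j)
    obtain t where t: "real j / Sr \<le> t" "t \<le> (real j + 1) / Sr" "z = SP b i t" using ptS[OF Sk(2) z1[unfolded Sk(3,4)]] by blast
    from e2 show ?thesis
    proof (cases rule: Ed_kinds)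
      case (Zs k) then show ?thesis using sym pZS[OF Zs(1) ptZ[OF Zs(1) z2[unfolded Zs(2,3)]] t] \<open>a = _\<close> \<open>c = _\<close> by simp
    next
      case Cl then show ?thesis using sym pCS[OF ptC[OF z2[unfolded Cl]] Sk(1,2) t] \<open>a = _\<close> \<open>c = _\<close> by simp
    next
      case (Sk b' k j')
      obtain t' where "real j' / Sr \<le> t'" "t' \<le> (real j' + 1) / Sr" "z = SP b' k t'" using ptS[OF Sk(2) z2[unfolded Sk(3,4)]] by blast
      then show ?thesis using pSS[OF \<open>i < L\<close> Sk(1) \<open>j < S\<close> Sk(2) _ t] ne \<open>a = _\<close> \<open>c = _\<close> Sk by simp
    next
      case P0 then show ?thesis using pSP0[OF Sk(2) t ptP0[OF z2[unfolded P0]]] \<open>a = _\<close> \<open>c = _\<close> by simp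
    next
      case (Pn j') then show ?thesis using pSPn[OF Sk(2) t ptPn[OF z2[unfolded Pn]]] by simp
    qed
  next
    case P0
    note p1 = ptP0[OF z1[unfolded P0]]
    from e2 show ?thesis
    proof (cases rule: Ed_kinds)
      case (Zs k) then show ?thesis using ptZ[OF Zs(1) z2[unfolded Zs(2,3)]] p1 S0 by simp
    next
      case Cl then show ?thesis using ptC[OF z2[unfolded Cl]] p1 S0 by linarith
    next
      case (Sk b k j)
      obtain t where "real j / Sr \<le> t" "t \<le> (real j + 1) / Sr" "z = SP b k t" using ptS[OF Sk(2) z2[unfolded Sk(3,4)]] by blast
      then show ?thesis using sym pSP0[OF Sk(2) _ _ _ p1] \<open>a = _\<close> \<open>c = _\<close> Sk by simp
    next
      case P0 then show ?thesis using ne \<open>a = _\<close> \<open>c = _\<close> by simp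
    next
      case (Pn j) then show ?thesis using pP0Pn[OF p1 ptPn[OF z2[unfolded Pn]]] \<open>a = _\<close> \<open>c = _\<close> by simp
    qed
  next
    case (Pn j)
    note p1 = ptPn[OF z1[unfolded Pn]]
    from e2 show ?thesis
    proof (cases rule: Ed_kinds)
      case (Zs k) then show ?thesis using ptZ[OF Zs(1) z2[unfolded Zs(2,3)]] p1 S0 by simp
    next
      case Cl then show ?thesis using ptC[OF z2[unfolded Cl]] p1 S0 by simp
    next
      case (Sk b k j')
      obtain t where tt: "real j' / Sr \<le> t" "t \<le> (real j' + 1) / Sr" "z = SP b k t" using ptS[OF Sk(2) z2[unfolded Sk(3,4)]] by blast
      show ?thesis using pSPn[OF Sk(2) tt p1] by simp
    next
      case P0 then show ?thesis using sym pP0Pn[OF ptP0[OF z2[unfolded P0]] p1] \<open>a = _\<close> \<open>c = _\<close> by simp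
    next
      case (Pn k) then show ?thesis using pPnPn[OF _ p1 ptPn[OF z2[unfolded Pn]]] ne \<open>a = _\<close> \<open>c = _\<close> by auto
    qed
  qed
qed

end

context gadget begin

lemma Pos_Sp: "Re (Pos (Sp b i j)) = real i + (real j / Sr) * (X - real i)" "Im (Pos (Sp b i j)) = sg b * real j"
  unfolding Pos_def SP_def using Sr_pos by auto

lemma Pos_inj: "inj_on Pos Dsc"
proof (rule inj_onI)
  fix x y assume x: "x \<in> Dsc" and y: "y \<in> Dsc" and eq: "Pos x = Pos y"
  have Re: "Re (Pos x) = Re (Pos y)" and Im: "Im (Pos x) = Im (Pos y)" using eq by auto
  have S0: "1 \<le> Sr" by (rule Sr_pos)
  have imcls: "(\<exists>i. v = Zd i \<and> Im (Pos v) = 0) \<or> (\<exists>b i j. v = Sp b i j \<and> 0 < j \<and> j < S \<and> Im (Pos v) = sg b * real j)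
     \<or> (\<exists>b. v = Pole b \<and> Im (Pos v) = sg b * Sr) \<or> (\<exists>j. v = Pd j \<and> Im (Pos v) = - Sr - 1 - real j)" if "v \<in> Dsc" for v
    using that Pos_Sp unfolding Dsc_def Pos_def by auto
  have Sj: "real j < Sr" if "j < S" for j using that unfolding Sr_def by simp
  show "x = y"
  proof (cases x)
    case (Zd i)
    then have "Im (Pos y) = 0" using Im unfolding Pos_def by simp
    then obtain k where "y = Zd k" using imcls[OF y] S0 unfolding sg_def by (auto split: if_splits)
    then show ?thesis using Re Zd unfolding Pos_def by simp
  next
    case (Sp b i j)
    then have ij: "0 < j" "j < S" "i < L" using x unfolding Dsc_def by auto
    have Ix: "Im (Pos y) = sg b * real j" using Im Sp Pos_Sp by simp
    then obtain k j' where y': "y = Sp b k j'" "0 < j'" "j' < S" "k < L" "j' = j"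
    proof -
      consider (a) k where "y = Zd k" "Im (Pos y) = 0" | (b) b' k j' where "y = Sp b' k j'" "0 < j'" "j' < S" "Im (Pos y) = sg b' * real j'"
        | (c) b' where "y = Pole b'" "Im (Pos y) = sg b' * Sr" | (d) j' where "y = Pd j'" "Im (Pos y) = - Sr - 1 - real j'"
        using imcls[OF y] by blast
      then show ?thesis
      proof cases
        case a then show ?thesis using Ix ij unfolding sg_def by (auto split: if_splits)
      next
        case (b b' k j')
        have kL: "k < L" using y b unfolding Dsc_def by auto
        have "sg b * real j = sg b' * real j'" using Ix b by simp
        then have "b = b' \<and> j = j'" using ij b unfolding sg_def by (auto split: if_splits)
        then show ?thesis using that b kL by blast
      next
        case c then show ?thesis using Ix ij Sj[of j] unfolding sg_def by (auto split: if_splits)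
      next
        case d then show ?thesis using Ix ij Sj[of j] S0 unfolding sg_def by (auto split: if_splits)
      qed
    qed
    have "real i + (real j / Sr) * (X - real i) = real k + (real j / Sr) * (X - real k)"
      using Re Sp y' Pos_Sp by simp
    moreover have "\<And>a b t Y :: real. a + t * (Y - a) = b + t * (Y - b) \<Longrightarrow> (a - b) * (1 - t) = 0"
      by (simp add: algebra_simps)
    ultimately have "(real i - real k) * (1 - real j / Sr) = 0" by blast
    moreover have "real j / Sr \<noteq> 1" using Sj[OF ij(2)] S0 by simp
    ultimately have "i = k" by auto
    then show ?thesis using Sp y' by simp
  next
    case (Pole b)
    then have Ix: "Im (Pos y) = sg b * Sr" "Re (Pos y) = X" using Im Re unfolding Pos_def by auto
    consider (a) k where "y = Zd k" "Im (Pos y) = 0" | (b) b' k j' where "y = Sp b' k j'" "0 < j'" "j' < S" "Im (Pos y) = sg b' * real j'"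
      | (c) b' where "y = Pole b'" "Im (Pos y) = sg b' * Sr" | (d) j' where "y = Pd j'" "Im (Pos y) = - Sr - 1 - real j'"
      using imcls[OF y] by blast
    then show ?thesis
    proof cases
      case a then show ?thesis using Ix S0 unfolding sg_def by (auto split: if_splits)
    next
      case (b b' k j') then show ?thesis using Ix Sj[of j'] unfolding sg_def by (auto split: if_splits)
    next
      case (c b') then show ?thesis using Ix S0 Pole unfolding sg_def by (auto split: if_splits)
    next
      case (d j') then show ?thesis using Ix S0 unfolding sg_def by (auto split: if_splits)
    qed
  next
    case (Pd j)
    then have Ix: "Im (Pos y) = - Sr - 1 - real j" using Im unfolding Pos_def by auto
    consider (a) k where "y = Zd k" "Im (Pos y) = 0" | (b) b' k j' where "y = Sp b' k j'" "0 < j'" "j' < S" "Im (Pos y) = sg b' * real j'"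
      | (c) b' where "y = Pole b'" "Im (Pos y) = sg b' * Sr" | (d) j' where "y = Pd j'" "Im (Pos y) = - Sr - 1 - real j'"
      using imcls[OF y] by blast
    then show ?thesis
    proof cases
      case a then show ?thesis using Ix S0 by simp
    next
      case (b b' k j') then show ?thesis using Ix Sj[of j'] S0 unfolding sg_def by (auto split: if_splits)
    next
      case (c b') then show ?thesis using Ix S0 unfolding sg_def by (auto split: if_splits)
    next
      case (d j') then show ?thesis using Ix Pd by simp
    qed
  qed
qed

end

context gadget begin

lemma Ed_spoke: "i < L \<Longrightarrow> j < S \<Longrightarrow> (spd b i j, spd b i (Suc j)) \<in> Ed"
  unfolding Ed_def by blast

lemma incident: "v \<in> Dsc \<Longrightarrow> \<exists>a c. (a,c) \<in> Ed \<and> v \<in> {a,c}"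
proof -
  assume v: "v \<in> Dsc"
  show ?thesis
  proof (cases v)
    case (Zd i) then have "i < L" using v unfolding Dsc_def by auto
    then show ?thesis using Zd unfolding Ed_def by blast
  next
    case (Sp b i j) then have "i < L" "0 < j" "j < S" using v unfolding Dsc_def by auto
    then have "(spd b i j, spd b i (Suc j)) \<in> Ed" using Ed_spoke by blast
    moreover have "spd b i j = v" using Sp \<open>0 < j\<close> \<open>j < S\<close> unfolding spd_def by auto
    ultimately show ?thesis by blast
  next
    case (Pole b)
    have "S - 1 < S" using basic by simp
    then have "(spd b 0 (S - 1), spd b 0 (Suc (S - 1))) \<in> Ed" using Ed_spoke L_pos by blast
    moreover have "spd b 0 (Suc (S - 1)) = v" using Pole spd_S basic by simp
    ultimately show ?thesis by blast
  next
    case (Pd j) then have jm: "j < m" using v unfolding Dsc_def by auto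
    show ?thesis
    proof (cases j)
      case 0 then show ?thesis using Pd jm unfolding Ed_def by blast
    next
      case (Suc j') then have "(Pd j', Pd (Suc j')) \<in> Ed" using jm unfolding Ed_def by blast
      then show ?thesis using Pd Suc by blast
    qed
  qed
qed

lemma Gam_props: "(a,c) \<in> Ed \<Longrightarrow> arc (Gam a c) \<and> pathstart (Gam a c) = Pos a \<and> pathfinish (Gam a c) = Pos c"
proof -
  assume ac: "(a,c) \<in> Ed"
  show ?thesis
  proof (cases "a = Zd (L - 1) \<and> c = Zd 0")
    case True
    then show ?thesis using clos_arc A1_Pos A4_Pos unfolding Gam_def clos_def by simp
  next
    case False
    have "Pos a \<noteq> Pos c" using Ed_Dsc[OF ac] Pos_inj unfolding inj_on_def by blast
    moreover have "Gam a c = linepath (Pos a) (Pos c)" unfolding Gam_def using False by (simp only: if_False)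
    ultimately show ?thesis by simp
  qed
qed

lemma planar: "planar_graph Vn E"
proof -
  define pos where "pos x = Pos (dec x)" for x
  define sel where "sel e = (SOME ab. ab \<in> Ed \<and> e = {enc (fst ab), enc (snd ab)})" for e
  define gam where "gam e = Gam (fst (sel e)) (snd (sel e))" for e
  have selP: "sel e \<in> Ed \<and> e = {enc (fst (sel e)), enc (snd (sel e))}" if "e \<in> E" for e
  proof -
    have "\<exists>ab. ab \<in> Ed \<and> e = {enc (fst ab), enc (snd ab)}" using that unfolding E_def by auto
    then show ?thesis unfolding sel_def by (rule someI_ex)
  qed
  have pe: "pos (enc a) = Pos a" if "a \<in> Dsc" for a unfolding pos_def using dec_enc[OF that] by simp
  have inj: "inj_on pos Vn"
  proof (rule inj_onI)
    fix x y assume "x \<in> Vn" "y \<in> Vn" "pos x = pos y"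
    then obtain a b where "a \<in> Dsc" "b \<in> Dsc" "x = enc a" "y = enc b" using enc_surj unfolding Vn_def by blast
    then show "x = y" using \<open>pos x = pos y\<close> pe Pos_inj unfolding inj_on_def by auto
  qed
  have c2: "arc (gam e) \<and> {pathstart (gam e), pathfinish (gam e)} = pos ` e" if "e \<in> E" for e
  proof -
    obtain a c where ac: "sel e = (a,c)" by (cases "sel e")
    then have "(a,c) \<in> Ed" "e = {enc a, enc c}" using selP[OF that] by auto
    then show ?thesis using Gam_props[of a c] Ed_Dsc pe ac unfolding gam_def by auto
  qed
  have c4: "path_image (gam e) \<inter> path_image (gam e') \<subseteq> pos ` (e \<inter> e')" if "e \<in> E" "e' \<in> E" "e \<noteq> e'" for e e'
  proof
    fix z assume z: "z \<in> path_image (gam e) \<inter> path_image (gam e')"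
    obtain a c where ac: "sel e = (a,c)" by (cases "sel e")
    obtain a' c' where ac': "sel e' = (a',c')" by (cases "sel e'")
    have e1: "(a,c) \<in> Ed" "e = {enc a, enc c}" using selP[OF that(1)] ac by auto
    have e2: "(a',c') \<in> Ed" "e' = {enc a', enc c'}" using selP[OF that(2)] ac' by auto
    have "{a,c} \<noteq> {a',c'}" using e1 e2 that(3) by auto
    then have "z \<in> Pos ` ({a,c} \<inter> {a',c'})" using edges_inter[OF e1(1) e2(1)] z ac ac' unfolding gam_def by auto
    then obtain w where w: "w \<in> {a,c}" "w \<in> {a',c'}" "z = Pos w" by blast
    have "w \<in> Dsc" using w Ed_Dsc e1 by auto
    then have "enc w \<in> e \<inter> e'" "pos (enc w) = z" using w e1 e2 pe by auto
    then show "z \<in> pos ` (e \<inter> e')" by blast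
  qed
  have c3: "x \<in> e" if eE: "e \<in> E" and xV: "x \<in> Vn" and px: "pos x \<in> path_image (gam e)" for e x
  proof -
    obtain v where v: "v \<in> Dsc" "x = enc v" using xV enc_surj unfolding Vn_def by blast
    obtain a' c' where ac': "(a',c') \<in> Ed" "v \<in> {a',c'}" using incident[OF v(1)] by blast
    define e' where "e' = {enc a', enc c'}"
    have e'E: "e' \<in> E" unfolding e'_def using edge_E[OF ac'(1)] .
    obtain a'' c'' where s: "sel e' = (a'', c'')" by (cases "sel e'")
    have s2: "(a'',c'') \<in> Ed" "e' = {enc a'', enc c''}" using selP[OF e'E] s by auto
    have vin: "v \<in> {a'',c''}"
    proof -
      have "enc v \<in> e'" using ac'(2) unfolding e'_def by auto
      then have "enc v = enc a'' \<or> enc v = enc c''" using s2 by auto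
      then show ?thesis using enc_inj v(1) Ed_Dsc[OF s2(1)] unfolding inj_on_def by auto
    qed
    have "Pos v \<in> path_image (gam e')"
      using Gam_props[OF s2(1)] vin pathstart_in_path_image[of "Gam a'' c''"] pathfinish_in_path_image[of "Gam a'' c''"]
      unfolding gam_def s by auto
    then have inn: "pos x \<in> path_image (gam e')" using pe v by simp
    show "x \<in> e"
    proof (cases "e = e'")
      case True then show ?thesis using ac'(2) v unfolding e'_def by auto
    next
      case False
      then have "pos x \<in> pos ` (e \<inter> e')" using c4[OF eE e'E False] inn px by blast
      then obtain y where y: "pos x = pos y" "y \<in> e \<inter> e'" by (rule imageE)
      have "y \<in> Vn" using y(2) eE wfE by auto
      then have "x = y" using inj xV y(1) unfolding inj_on_def by blast
      then show ?thesis using y(2) by simp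
    qed
  qed
  have A1: "\<forall>e\<in>E. arc (gam e) \<and> {pathstart (gam e), pathfinish (gam e)} = pos ` e"
    using c2 by (intro ballI)
  have A2: "\<forall>e\<in>E. \<forall>x\<in>Vn. pos x \<in> path_image (gam e) \<longrightarrow> x \<in> e"
    using c3 by (intro ballI impI)
  have A3: "\<forall>e\<in>E. \<forall>e'\<in>E. e \<noteq> e' \<longrightarrow> path_image (gam e) \<inter> path_image (gam e') \<subseteq> pos ` (e \<inter> e')"
    using c4 by (intro ballI impI)
  show ?thesis unfolding planar_graph_def
    by (rule exI[of _ pos], rule exI[of _ gam], intro conjI inj A1 A2 A3)
qed

end

lemma nine: assumes "real d \<le> sqrt (real n) / 3" shows "9 * d^2 \<le> n"
proof -
  have "real (3 * d) \<le> sqrt (real n)" using assms by simp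
  then have "(real (3 * d))^2 \<le> (sqrt (real n))^2" by (intro power_mono) auto
  then have "real ((3 * d)^2) \<le> real n" by simp
  then show ?thesis by (simp only: of_nat_le_iff power_mult_distrib) simp
qed

theorem theorem1:
  fixes n d :: nat
  assumes "1 \<le> d" and "real d \<le> sqrt (real n) / 3"
  shows "\<exists>(E :: nat set set) u v (rho :: nat set \<Rightarrow> nat).
           simple_graph {..<n} E \<and> connected_graph {..<n} E \<and> planar_graph {..<n} E \<and>
           u \<in> {..<n} \<and> v \<in> {..<n} \<and> gdist {..<n} E u v = d \<and>
           (\<forall>C. C \<subseteq> {..<n} \<and> C \<noteq> {} \<longrightarrow> rho C \<in> C) \<and>
           (\<forall>R K1 K2 K3. R > 2 * d \<and> (\<forall>C. K1 C < R \<and> K2 C < R \<and> K3 C < R) \<longrightarrow>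
               reach {..<n} (E - kpr_removed {..<n} E R rho K1 K2 K3) u v)"
proof -
  interpret g: gadget d n using assms(1) nine[OF assms(2)] by unfold_locales
  have v0: "g.v0 \<in> g.Vn" unfolding g.v0_def using g.enc_Vn[OF g.Zd_Dsc] g.basic by simp
  have rin: "\<forall>C. C \<subseteq> g.Vn \<and> C \<noteq> {} \<longrightarrow> g.rho C \<in> C"
    using g.rho_in by simp
  have mr: "\<forall>R K1 K2 K3. R > 2 * d \<and> (\<forall>C. K1 C < R \<and> K2 C < R \<and> K3 C < R) \<longrightarrow>
               reach g.Vn (g.E - kpr_removed g.Vn g.E R g.rho K1 K2 K3) g.u0 g.v0"
    using g.main_reach by simp
  have all: "simple_graph g.Vn g.E \<and> connected_graph g.Vn g.E \<and> planar_graph g.Vn g.E \<and>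
           g.u0 \<in> g.Vn \<and> g.v0 \<in> g.Vn \<and> gdist g.Vn g.E g.u0 g.v0 = d \<and>
           (\<forall>C. C \<subseteq> g.Vn \<and> C \<noteq> {} \<longrightarrow> g.rho C \<in> C) \<and>
           (\<forall>R K1 K2 K3. R > 2 * d \<and> (\<forall>C. K1 C < R \<and> K2 C < R \<and> K3 C < R) \<longrightarrow>
               reach g.Vn (g.E - kpr_removed g.Vn g.E R g.rho K1 K2 K3) g.u0 g.v0)"
    by (intro conjI g.simple g.connected g.planar g.u0_Vn v0 g.dist_uv rin mr)
  show ?thesis
    apply (rule exI[of _ g.E], rule exI[of _ g.u0], rule exI[of _ g.v0], rule exI[of _ g.rho])
    using all unfolding g.Vn_def .
qed

end
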